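(* Let $A$ be a finite action set, $a^*\in A$, and let $A^-$ be a nonempty proper subset of $A$. Let $\mu$ and $\mu'$ be two monitoring technologies with $\min_{a\in A^-}\mathrm{KL}(\mu_a,\mu_{a^*})>\min_{a\in A^-}\mathrm{KL}(\mu'_a,\mu'_{a^*})$. Then for any $\underline w$, $u$ and $c$ satisfying the standing assumptions with $A^-(c,a^* )=A^-$, there exists $N$ such that for all $n\ge N$, $$C^{\mathrm{SB}}_n(\mu,u,c,a^* )\le C^{\mathrm{bin}}_n(\mu,u,c,a^* )<C^{\mathrm{SB}}_n(\mu',u,c,a^* ).$$
   Context: A monitoring technology $\mu=(\mu_a)_{a\in A}$ consists of Borel probability measures on a signal space $X$ (a subset of a Euclidean space) with $\mu_a\neq\mu_{a'}$ for $a\neq a'$, $\mu_{a'}\ll\mu_a$ for all $a,a'$, and $\int(\frac{d\mu_{a'}}{d\mu_a})^\lambda d\mu_a<\infty$ for all $\lambda>0$. Under action $a$ the principal observes $x^n$, $n$ i.i.d. draws from $\mu_a$, with expectation $\mathbb{E}_a$. Standing assumptions: $\underline w\in\mathbb{R}$, $u:[\underline w,\infty)\to\mathbb{R}$ is $C^2$ with $u'>0$, $u''<0$, $\lim_{w\to\infty}u'(w)=0$; $c:A\to\mathbb{R}$ with $c(A)\subseteq\mathrm{int}\,u([\underline w,\infty))$, $c(a^* )>c(a)$ for some $a$ and $c(a^* )\neq c(a)$ for all $a\neq a^*$. Outside option is $0$. A contract $w:X^n\to[\underline w,\infty)$ satisfies (IC) if $\mathbb{E}_{a^*}[u(w)]-c(a^*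 )\ge\mathbb{E}_a[u(w)]-c(a)$ for all $a\in A$ and (IR) if $\mathbb{E}_{a^*}[u(w)]-c(a^* )\ge0$. $C^{\mathrm{SB}}_n(\mu,u,c,a^* )$ is the infimum of $\mathbb{E}_{a^*}[w(x^n)]$ over contracts satisfying (IC),(IR) (signals from $\mu$); $C^{\mathrm{bin}}_n$ is the same restricted to contracts with $|w(X^n)|=2$. $A^-(c,a^* )=\{a:c(a)<c(a^* )\}$. $\mathrm{KL}(\nu,\nu')=\int\log\frac{d\nu}{d\nu'}d\nu$ if $\nu\ll\nu'$, else $\infty$. *)

theory Defs
  imports "HOL-Probability.Probability"
begin

text \<open>Monitoring technology on signal space X (subset of a Euclidean space) for action set A.
  RN_deriv M N is the density dN/dM.\<close>
definition monitoring_tech :: "'x::euclidean_space set \<Rightarrow> 'a set \<Rightarrow> ('a \<Rightarrow> 'x measure) \<Rightarrow> bool" where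
  "monitoring_tech X A \<mu> \<longleftrightarrow>
     (\<forall>a\<in>A. prob_space (\<mu> a) \<and> sets (\<mu> a) = sets (restrict_space borel X)) \<and>
     (\<forall>a\<in>A. \<forall>a'\<in>A. a \<noteq> a' \<longrightarrow> \<mu> a \<noteq> \<mu> a') \<and>
     (\<forall>a\<in>A. \<forall>a'\<in>A. absolutely_continuous (\<mu> a) (\<mu> a')) \<and>
     (\<forall>a\<in>A. \<forall>a'\<in>A. \<forall>l::real. l > 0 \<longrightarrow>
        (\<integral>\<^sup>+ x. ennreal (enn2real (RN_deriv (\<mu> a) (\<mu> a') x) powr l) \<partial>(\<mu> a)) < \<infinity>)"

definition KL :: "'x measure \<Rightarrow> 'x measure \<Rightarrow> ereal" where
  "KL \<nu> \<nu>' = (if absolutely_continuous \<nu>' \<nu> then ereal (KL_divergence (exp 1) \<nu>' \<nu>) else \<infinity>)"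

definition standing_assms :: "real \<Rightarrow> (real \<Rightarrow> real) \<Rightarrow> ('a \<Rightarrow> real) \<Rightarrow> 'a set \<Rightarrow> 'a \<Rightarrow> bool" where
  "standing_assms wl u c A astar \<longleftrightarrow>
     (\<exists>u1 u2. (\<forall>w\<ge>wl. (u has_real_derivative u1 w) (at w within {wl..}) \<and>
                        (u1 has_real_derivative u2 w) (at w within {wl..}) \<and>
                        u1 w > 0 \<and> u2 w < 0) \<and>
              continuous_on {wl..} u2 \<and> (u1 \<longlongrightarrow> 0) at_top) \<and>
     c ` A \<subseteq> interior (u ` {wl..}) \<and>
     (\<exists>a\<in>A. c astar > c a) \<and>
     (\<forall>a\<in>A. a \<noteq> astar \<longrightarrow> c a \<noteq> c astar)"

definition Aminus :: "('a \<Rightarrow> real) \<Rightarrow> 'a set \<Rightarrow> 'a \<Rightarrow> 'a set" where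
  "Aminus c A astar = {a\<in>A. c a < c astar}"

definition iid :: "('a \<Rightarrow> 'x measure) \<Rightarrow> 'a \<Rightarrow> nat \<Rightarrow> (nat \<Rightarrow> 'x) measure" where
  "iid \<mu> a n = PiM {..<n} (\<lambda>_. \<mu> a)"

text \<open>Admissible contract: measurable, values in [wl, inf), satisfies (IC) and (IR).
  Integrability of u(w) under every action is no loss (u(w) is bounded below, so
  a non-integrable u(w) has expectation +inf and violates IC); integrability of w
  under astar is no loss (otherwise the cost is +inf).\<close>
definition contract_ok :: "real \<Rightarrow> (real \<Rightarrow> real) \<Rightarrow> ('a \<Rightarrow> real) \<Rightarrow> 'a set \<Rightarrow> 'a \<Rightarrow>
    ('a \<Rightarrow> 'x measure) \<Rightarrow> nat \<Rightarrow> ((nat \<Rightarrow> 'x) \<Rightarrow> real) \<Rightarrow> bool" where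
  "contract_ok wl u c A astar \<mu> n w \<longleftrightarrow>
     w \<in> borel_measurable (iid \<mu> astar n) \<and>
     (\<forall>x\<in>space (iid \<mu> astar n). w x \<ge> wl) \<and>
     integrable (iid \<mu> astar n) w \<and>
     (\<forall>a\<in>A. integrable (iid \<mu> a n) (\<lambda>x. u (w x))) \<and>
     (\<forall>a\<in>A. (\<integral>x. u (w x) \<partial>iid \<mu> astar n) - c astar \<ge> (\<integral>x. u (w x) \<partial>iid \<mu> a n) - c a) \<and>
     (\<integral>x. u (w x) \<partial>iid \<mu> astar n) - c astar \<ge> 0"

definition C_SB :: "real \<Rightarrow> (real \<Rightarrow> real) \<Rightarrow> ('a \<Rightarrow> real) \<Rightarrow> 'a set \<Rightarrow> 'a \<Rightarrow>
    ('a \<Rightarrow> 'x measure) \<Rightarrow> nat \<Rightarrow> ereal" where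
  "C_SB wl u c A astar \<mu> n =
     Inf {ereal (\<integral>x. w x \<partial>iid \<mu> astar n) | w. contract_ok wl u c A astar \<mu> n w}"

definition C_bin :: "real \<Rightarrow> (real \<Rightarrow> real) \<Rightarrow> ('a \<Rightarrow> real) \<Rightarrow> 'a set \<Rightarrow> 'a \<Rightarrow>
    ('a \<Rightarrow> 'x measure) \<Rightarrow> nat \<Rightarrow> ereal" where
  "C_bin wl u c A astar \<mu> n =
     Inf {ereal (\<integral>x. w x \<partial>iid \<mu> astar n) | w. contract_ok wl u c A astar \<mu> n w \<and>
            card (w ` space (iid \<mu> astar n)) = 2}"

end

theory Submission
  imports Defs "HOL-Real_Asymp.Real_Asymp"
begin

lemma exp_minus_one_abs: "\<bar>exp x - 1\<bar> \<le> \<bar>x\<bar> * exp \<bar>x\<bar>" for x :: real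
proof (cases "x \<ge> 0")
  case True
  have "exp (-x) \<ge> 1 - x" using exp_ge_add_one_self[of "-x"] by simp
  hence "1 \<ge> (1 - x) * exp x" by (simp add: exp_minus field_simps)
  thus ?thesis using True by (simp add: algebra_simps)
next
  case False
  have "exp x \<ge> 1 + x" using exp_ge_add_one_self[of x] by simp
  moreover have "exp x \<le> 1" using False by simp
  moreover have "exp \<bar>x\<bar> \<ge> 1" by simp
  ultimately show ?thesis using False
    by (smt (verit, ccfv_SIG) mult_le_cancel_left1)
qed

lemma exp_diff_quot_lim: "((\<lambda>g. (exp (g * t) - 1) / g) \<longlongrightarrow> (t::real)) (at 0)"
proof -
  have "((\<lambda>g. exp (g * t)) has_real_derivative (exp (0 * t) * t)) (at 0)"
    by (auto intro!: derivative_eq_intros)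
  hence "((\<lambda>g. (exp (g * t) - exp (0 * t)) / (g - 0)) \<longlongrightarrow> exp (0*t) * t) (at 0)"
    using DERIV_def[THEN iffD1] by (simp add: has_field_derivative_iff)
  thus ?thesis by simp
qed

lemma pw_bound:
  fixes l g :: real
  assumes "l \<ge> 0" "\<bar>g\<bar> \<le> 1/2" "g \<noteq> 0"
  shows "\<bar>(l powr (1 + g) - l) / g\<bar> \<le> 2 + l powr (5/2)"
proof (cases "l = 0")
  case True thus ?thesis by simp
next
  case False
  hence lp: "l > 0" using assms by simp
  define t where "t = ln l"
  have l: "l = exp t" using lp t_def by simp
  have pe: "l powr (1 + g) = l * exp (g * t)" using lp by (simp add: powr_def t_def distrib_right exp_add)
  have eq: "(l powr (1 + g) - l) / g = l * ((exp (g * t) - 1) / g)"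
    unfolding pe by (simp add: algebra_simps diff_divide_distrib)
  have "\<bar>exp (g * t) - 1\<bar> \<le> \<bar>g * t\<bar> * exp \<bar>g * t\<bar>" by (rule exp_minus_one_abs)
  also have "\<dots> \<le> \<bar>g\<bar> * \<bar>t\<bar> * exp (\<bar>t\<bar>/2)"
  proof -
    have "\<bar>g * t\<bar> \<le> \<bar>t\<bar>/2" using assms(2) by (simp add: abs_mult mult_right_mono[of _ "1/2" "\<bar>t\<bar>", simplified])
    thus ?thesis by (simp add: abs_mult mult_left_mono)
  qed
  finally have b1: "\<bar>(exp (g * t) - 1) / g\<bar> \<le> \<bar>t\<bar> * exp (\<bar>t\<bar>/2)"
    using assms(3) by (simp add: abs_divide divide_le_eq mult.commute mult.left_commute)
  have "\<bar>(l powr (1 + g) - l) / g\<bar> \<le> exp t * (\<bar>t\<bar> * exp (\<bar>t\<bar>/2))"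
  proof -
    have "\<bar>(l powr (1 + g) - l) / g\<bar> = exp t * \<bar>(exp (g * t) - 1) / g\<bar>"
      unfolding eq using l by (simp add: abs_mult)
    thus ?thesis using b1 by (simp add: mult_left_mono del: abs_divide)
  qed
  also have "\<dots> \<le> 2 + l powr (5/2)"
  proof (cases "t \<ge> 0")
    case True
    have "t \<le> exp t" using exp_ge_add_one_self[of t] by linarith
    hence "exp t * (\<bar>t\<bar> * exp (\<bar>t\<bar>/2)) \<le> exp t * (exp t * exp (t/2))"
      using True by (simp add: mult_left_mono mult_right_mono)
    also have "\<dots> = exp (5/2 * t)" by (simp flip: exp_add)
    also have "\<dots> = l powr (5/2)" using lp by (simp add: powr_def t_def)
    finally show ?thesis by simp
  next
    case False
    have "\<bar>t\<bar>/2 \<le> exp (\<bar>t\<bar>/2)" using exp_ge_add_one_self[of "\<bar>t\<bar>/2"] by linarith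
    hence "exp t * (\<bar>t\<bar> * exp (\<bar>t\<bar>/2)) \<le> exp t * (2 * exp (\<bar>t\<bar>/2) * exp (\<bar>t\<bar>/2))"
      by (simp add: mult_left_mono mult_right_mono)
    also have "\<dots> = 2" using False by (simp flip: exp_add)
    finally show ?thesis using powr_ge_zero[of l "5/2"] by linarith
  qed
  finally show ?thesis .
qed

lemma pw_lim:
  fixes l :: real and g :: "nat \<Rightarrow> real"
  assumes "l \<ge> 0" "g \<longlonglongrightarrow> 0" "\<And>k. g k \<noteq> 0"
  shows "(\<lambda>k. (l powr (1 + g k) - l) / g k) \<longlonglongrightarrow> l * ln l"
proof (cases "l = 0")
  case True thus ?thesis by simp
next
  case False
  hence lp: "l > 0" using assms by simp
  have pe: "l powr (1 + g k) = l * exp (g k * ln l)" for k using lp by (simp add: powr_def distrib_right exp_add)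
  have eq: "(l powr (1 + g k) - l) / g k = l * ((exp (g k * ln l) - 1) / g k)" for k
    unfolding pe by (simp add: algebra_simps diff_divide_distrib)
  have g: "filterlim g (at 0) sequentially"
    using assms(2,3) by (simp add: filterlim_at eventually_sequentially)
  have "(\<lambda>k. (exp (g k * ln l) - 1) / g k) \<longlonglongrightarrow> ln l"
    using filterlim_compose[OF exp_diff_quot_lim g] by simp
  thus ?thesis unfolding eq by (intro tendsto_mult tendsto_const)
qed

lemma renyi_lim:
  fixes M :: "'x measure" and l :: "'x \<Rightarrow> real" and g :: "nat \<Rightarrow> real"
  assumes "prob_space M" "l \<in> borel_measurable M" "\<And>x. x \<in> space M \<Longrightarrow> l x \<ge> 0"
    "integrable M (\<lambda>x. l x powr (5/2))"
    "g \<longlonglongrightarrow> 0" "\<And>k. g k \<noteq> 0" "\<And>k. \<bar>g k\<bar> \<le> 1/2"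
  shows "integrable M (\<lambda>x. l x * ln (l x))"
    "(\<lambda>k. \<integral>x. (l x powr (1 + g k) - l x) / g k \<partial>M) \<longlonglongrightarrow> (\<integral>x. l x * ln (l x) \<partial>M)"
proof -
  interpret prob_space M by fact
  have w: "integrable M (\<lambda>x. 2 + l x powr (5/2))" using assms(4) by simp
  have meas: "(\<lambda>x. l x * ln (l x)) \<in> borel_measurable M" using assms(2) by measurable
  have smeas: "\<And>k. (\<lambda>x. (l x powr (1 + g k) - l x) / g k) \<in> borel_measurable M" using assms(2) by measurable
  have lim: "AE x in M. (\<lambda>k. (l x powr (1 + g k) - l x) / g k) \<longlonglongrightarrow> l x * ln (l x)"
    using assms by (intro AE_I2 pw_lim) auto
  have bnd: "\<And>k. AE x in M. norm ((l x powr (1 + g k) - l x) / g k) \<le> 2 + l x powr (5/2)"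
  proof (intro AE_I2)
    fix k x assume "x \<in> space M"
    thus "norm ((l x powr (1 + g k) - l x) / g k) \<le> 2 + l x powr (5/2)"
      unfolding real_norm_def using assms by (intro pw_bound) auto
  qed
  show "integrable M (\<lambda>x. l x * ln (l x))"
    by (rule integrable_dominated_convergence[OF meas smeas w lim bnd])
  show "(\<lambda>k. \<integral>x. (l x powr (1 + g k) - l x) / g k \<partial>M) \<longlonglongrightarrow> (\<integral>x. l x * ln (l x) \<partial>M)"
    by (rule integral_dominated_convergence[OF meas smeas w lim bnd])
qed

lemma renyi_sides:
  fixes M :: "'x measure" and l :: "'x \<Rightarrow> real"
  assumes "prob_space M" "l \<in> borel_measurable M" "\<And>x. x \<in> space M \<Longrightarrow> l x \<ge> 0"
    "\<And>r. r > 0 \<Longrightarrow> integrable M (\<lambda>x. l x powr r)"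
    "(\<integral>x. l x \<partial>M) = 1"
  shows "\<And>\<tau>. \<tau> < (\<integral>x. l x * ln (l x) \<partial>M) \<Longrightarrow>
           \<exists>b. 0 < b \<and> b < 1 \<and> (\<integral>x. l x powr (1 - b) \<partial>M) < exp (- b * \<tau>)"
    and "\<And>s. s > (\<integral>x. l x * ln (l x) \<partial>M) \<Longrightarrow>
           \<exists>b. 0 < b \<and> (\<integral>x. l x powr (1 + b) \<partial>M) < exp (b * s)"
proof -
  have F: "\<And>g. g \<noteq> 0 \<Longrightarrow> \<bar>g\<bar> \<le> 1/2 \<Longrightarrow>
      (\<integral>x. (l x powr (1 + g) - l x) / g \<partial>M) = ((\<integral>x. l x powr (1 + g) \<partial>M) - 1) / g"
  proof -
    fix g :: real assume "g \<noteq> 0" "\<bar>g\<bar> \<le> 1/2"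
    have i1: "integrable M (\<lambda>x. l x powr (1 + g))" using assms(4)[of "1+g"] \<open>\<bar>g\<bar> \<le> 1/2\<close> by simp
    have i2: "integrable M l"
    proof -
      have "integrable M (\<lambda>x. l x powr 1)" using assms(4)[of 1] by simp
      moreover have "\<And>x. x \<in> space M \<Longrightarrow> l x powr 1 = l x" using assms(3)
        by (metis powr_one powr_zero_eq_one order_le_less)
      moreover have "integrable M (\<lambda>x. l x powr 1) = integrable M l"
        by (rule Bochner_Integration.integrable_cong) (use calculation(2) in auto)
      ultimately show ?thesis by simp
    qed
    have "(\<integral>x. (l x powr (1 + g) - l x) / g \<partial>M) = (\<integral>x. (l x powr (1 + g) - l x) \<partial>M) / g"
      by simp
    also have "\<dots> = ((\<integral>x. l x powr (1 + g) \<partial>M) - 1) / g"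
      using i1 i2 assms(5) by (simp add: integral_diff)
    finally show "?thesis g" .
  qed
  show "\<exists>b. 0 < b \<and> b < 1 \<and> (\<integral>x. l x powr (1 - b) \<partial>M) < exp (- b * \<tau>)"
    if tau: "\<tau> < (\<integral>x. l x * ln (l x) \<partial>M)" for \<tau>
  proof -
    define g where "g k = - 1 / (real k + 2)" for k
    have g0: "g \<longlonglongrightarrow> 0" unfolding g_def
      by real_asymp
    have gne: "g k \<noteq> 0" "\<bar>g k\<bar> \<le> 1/2" "g k < 0" for k unfolding g_def by (auto simp: field_simps)
    have lim: "(\<lambda>k. ((\<integral>x. l x powr (1 + g k) \<partial>M) - 1) / g k) \<longlonglongrightarrow> (\<integral>x. l x * ln (l x) \<partial>M)"
    proof -
      have eqk: "\<And>k. (\<integral>x. (l x powr (1 + g k) - l x) / g k \<partial>M) = ((\<integral>x. l x powr (1 + g k) \<partial>M) - 1) / g k"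
        using F gne by blast
      show ?thesis using renyi_lim(2)[OF assms(1-3) assms(4)[of "5/2"] g0 gne(1,2)] unfolding eqk by simp
    qed
    from order_tendstoD(1)[OF lim tau] obtain k where
      k: "((\<integral>x. l x powr (1 + g k) \<partial>M) - 1) / g k > \<tau>"
      by (auto simp: eventually_sequentially)
    hence "(\<integral>x. l x powr (1 + g k) \<partial>M) - 1 < \<tau> * g k" using gne(3)[of k] by (simp add: pos_less_divide_eq neg_less_divide_eq)
    also have "1 + \<tau> * g k \<le> exp (\<tau> * g k)" by (rule exp_ge_add_one_self)
    ultimately have "(\<integral>x. l x powr (1 + g k) \<partial>M) < exp (\<tau> * g k)" by linarith
    thus ?thesis using gne[of k] by (intro exI[of _ "- g k"]) (auto simp: mult.commute)
  qed
  show "\<exists>b. 0 < b \<and> (\<integral>x. l x powr (1 + b) \<partial>M) < exp (b * s)"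
    if s: "s > (\<integral>x. l x * ln (l x) \<partial>M)" for s
  proof -
    define g where "g k = 1 / (real k + 2)" for k
    have g0: "g \<longlonglongrightarrow> 0" unfolding g_def
      by real_asymp
    have gne: "g k \<noteq> 0" "\<bar>g k\<bar> \<le> 1/2" "g k > 0" for k unfolding g_def by (auto simp: field_simps)
    have lim: "(\<lambda>k. ((\<integral>x. l x powr (1 + g k) \<partial>M) - 1) / g k) \<longlonglongrightarrow> (\<integral>x. l x * ln (l x) \<partial>M)"
    proof -
      have eqk: "\<And>k. (\<integral>x. (l x powr (1 + g k) - l x) / g k \<partial>M) = ((\<integral>x. l x powr (1 + g k) \<partial>M) - 1) / g k"
        using F gne by blast
      show ?thesis using renyi_lim(2)[OF assms(1-3) assms(4)[of "5/2"] g0 gne(1,2)] unfolding eqk by simp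
    qed
    from order_tendstoD(2)[OF lim s] obtain k where
      k: "((\<integral>x. l x powr (1 + g k) \<partial>M) - 1) / g k < s"
      by (auto simp: eventually_sequentially)
    hence "(\<integral>x. l x powr (1 + g k) \<partial>M) - 1 < s * g k" using gne(3)[of k] by (simp add: pos_divide_less_eq)
    also have "1 + s * g k \<le> exp (s * g k)" by (rule exp_ge_add_one_self)
    ultimately have "(\<integral>x. l x powr (1 + g k) \<partial>M) < exp (s * g k)" by linarith
    thus ?thesis using gne[of k] by (intro exI[of _ "g k"]) (auto simp: mult.commute)
  qed
qed

lemma prod_nn:
  fixes M :: "'x measure" and g :: "'x \<Rightarrow> real" and n :: nat
  assumes "prob_space M" "g \<in> borel_measurable M" and that: "\<And>x. x \<in> space M \<Longrightarrow> g x \<ge> 0"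
  shows "(\<integral>\<^sup>+x. ennreal (\<Prod>i<n. g (x i)) \<partial>PiM {..<n} (\<lambda>_. M)) = (\<integral>\<^sup>+x. ennreal (g x) \<partial>M) ^ n"
proof -
  interpret prob_space M by fact
  interpret product_sigma_finite "\<lambda>_. M" by unfold_locales
  have "(\<integral>\<^sup>+x. ennreal (\<Prod>i<n. g (x i)) \<partial>PiM {..<n} (\<lambda>_. M)) =
        (\<integral>\<^sup>+x. (\<Prod>i<n. ennreal (g (x i))) \<partial>PiM {..<n} (\<lambda>_. M))"
  proof (rule nn_integral_cong)
    fix x assume "x \<in> space (PiM {..<n} (\<lambda>_. M))"
    hence "\<And>i. i < n \<Longrightarrow> x i \<in> space M" by (auto simp: space_PiM)
    thus "ennreal (\<Prod>i<n. g (x i)) = (\<Prod>i<n. ennreal (g (x i)))"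
      using that by (intro prod_ennreal[symmetric]) auto
  qed
  also have "\<dots> = (\<Prod>i<n. \<integral>\<^sup>+x. ennreal (g x) \<partial>M)"
    by (rule product_nn_integral_prod) (use assms in auto)
  finally show ?thesis by simp
qed

lemma prod_int:
  fixes M :: "'x measure" and g :: "'x \<Rightarrow> real" and n :: nat
  assumes "prob_space M" "g \<in> borel_measurable M" "\<And>x. x \<in> space M \<Longrightarrow> g x \<ge> 0"
    "integrable M g"
  shows "integrable (PiM {..<n} (\<lambda>_. M)) (\<lambda>x. \<Prod>i<n. g (x i))"
    "(\<integral>x. (\<Prod>i<n. g (x i)) \<partial>PiM {..<n} (\<lambda>_. M)) = (\<integral>x. g x \<partial>M) ^ n"
proof -
  have nn: "(\<integral>\<^sup>+x. ennreal (g x) \<partial>M) = ennreal (\<integral>x. g x \<partial>M)"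
    using assms by (intro nn_integral_eq_integral) auto
  have meas: "(\<lambda>x. \<Prod>i<n. g (x i)) \<in> borel_measurable (PiM {..<n} (\<lambda>_. M))"
    using assms(2) by measurable
  have pos: "\<And>x. x \<in> space (PiM {..<n} (\<lambda>_. M)) \<Longrightarrow> (\<Prod>i<n. g (x i)) \<ge> 0"
    using assms(3) by (auto simp: space_PiM intro!: prod_nonneg)
  have P: "(\<integral>\<^sup>+x. ennreal (\<Prod>i<n. g (x i)) \<partial>PiM {..<n} (\<lambda>_. M)) = ennreal ((\<integral>x. g x \<partial>M) ^ n)"
    using prod_nn[OF assms(1,2) assms(3)] nn by (simp add: ennreal_power integral_nonneg_AE assms(3))
  show int: "integrable (PiM {..<n} (\<lambda>_. M)) (\<lambda>x. \<Prod>i<n. g (x i))"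
  proof (rule integrableI_bounded[OF meas])
    have "(\<integral>\<^sup>+x. ennreal (norm (\<Prod>i<n. g (x i))) \<partial>PiM {..<n} (\<lambda>_. M)) =
          (\<integral>\<^sup>+x. ennreal (\<Prod>i<n. g (x i)) \<partial>PiM {..<n} (\<lambda>_. M))"
      by (intro nn_integral_cong) (use pos in auto)
    thus "(\<integral>\<^sup>+x. ennreal (norm (\<Prod>i<n. g (x i))) \<partial>PiM {..<n} (\<lambda>_. M)) < \<infinity>"
      using P by simp
  qed
  have "(\<integral>x. (\<Prod>i<n. g (x i)) \<partial>PiM {..<n} (\<lambda>_. M)) = enn2real (\<integral>\<^sup>+x. ennreal (\<Prod>i<n. g (x i)) \<partial>PiM {..<n} (\<lambda>_. M))"
    by (rule integral_eq_nn_integral[OF meas]) (use pos in auto)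
  also have "\<dots> = (\<integral>x. g x \<partial>M) ^ n" using P
    by (simp add: integral_nonneg_AE assms(3))
  finally show "(\<integral>x. (\<Prod>i<n. g (x i)) \<partial>PiM {..<n} (\<lambda>_. M)) = (\<integral>x. g x \<partial>M) ^ n" .
qed

lemma PiM_density:
  fixes M :: "'x measure" and l :: "'x \<Rightarrow> real" and n :: nat
  assumes "prob_space M" "l \<in> borel_measurable M" "\<And>x. x \<in> space M \<Longrightarrow> l x \<ge> 0"
    "prob_space (density M l)"
  shows "PiM {..<n} (\<lambda>_. density M l) = density (PiM {..<n} (\<lambda>_. M)) (\<lambda>x. ennreal (\<Prod>i<n. l (x i)))"
proof -
  interpret M: prob_space M by fact
  interpret D: prob_space "density M l" by fact
  interpret PM: product_sigma_finite "\<lambda>_. M" by unfold_locales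
  interpret PD: product_sigma_finite "\<lambda>_. density M l" by unfold_locales
  have sets_eq: "sets (PiM {..<n} (\<lambda>_. density M l)) = sets (PiM {..<n} (\<lambda>_. M))"
    by (intro sets_PiM_cong) auto
  show ?thesis
  proof (rule PD.PiM_eqI[symmetric])
    show "finite {..<n}" by simp
    show "sets (density (PiM {..<n} (\<lambda>_. M)) (\<lambda>x. ennreal (\<Prod>i<n. l (x i)))) = sets (PiM {..<n} (\<lambda>_. density M l))"
      using sets_eq by simp
    fix A assume A: "\<And>i. i \<in> {..<n} \<Longrightarrow> A i \<in> sets (density M l)"
    hence A': "\<And>i. i \<in> {..<n} \<Longrightarrow> A i \<in> sets M" by simp
    have "emeasure (density (PiM {..<n} (\<lambda>_. M)) (\<lambda>x. ennreal (\<Prod>i<n. l (x i)))) (PiE {..<n} A)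
        = (\<integral>\<^sup>+x. ennreal (\<Prod>i<n. l (x i)) * indicator (PiE {..<n} A) x \<partial>PiM {..<n} (\<lambda>_. M))"
    proof (rule emeasure_density)
      show "(\<lambda>x. ennreal (\<Prod>i<n. l (x i))) \<in> borel_measurable (Pi\<^sub>M {..<n} (\<lambda>_. M))"
      proof -
        have "(\<lambda>x. \<Prod>i<n. l (x i)) \<in> borel_measurable (Pi\<^sub>M {..<n} (\<lambda>_. M))"
          using assms(2) by measurable
        thus ?thesis by (rule measurable_compose) simp
      qed
      show "Pi\<^sub>E {..<n} A \<in> sets (Pi\<^sub>M {..<n} (\<lambda>_. M))"
        using A' by (intro sets_PiM_I_finite) auto
    qed
    also have "\<dots> = (\<integral>\<^sup>+x. (\<Prod>i<n. ennreal (l (x i)) * indicator (A i) (x i)) \<partial>PiM {..<n} (\<lambda>_. M))"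
    proof (rule nn_integral_cong)
      fix x assume "x \<in> space (PiM {..<n} (\<lambda>_. M))"
      hence "x \<in> PiE {..<n} (\<lambda>_. space M)" by (simp add: space_PiM)
      hence x: "\<And>i. i < n \<Longrightarrow> x i \<in> space M" "x \<in> extensional {..<n}" unfolding PiE_iff by auto
      have "indicator (PiE {..<n} A) x = (\<Prod>i<n. indicator (A i) (x i) :: ennreal)"
        using x(2) by (auto simp: indicator_def PiE_def Pi_def prod_zero_iff)
      moreover have "ennreal (\<Prod>i<n. l (x i)) = (\<Prod>i<n. ennreal (l (x i)))"
        using x assms(3) by (intro prod_ennreal[symmetric]) auto
      ultimately show "ennreal (\<Prod>i<n. l (x i)) * indicator (PiE {..<n} A) x = (\<Prod>i<n. ennreal (l (x i)) * indicator (A i) (x i))"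
        by (simp add: prod.distrib)
    qed
    also have "\<dots> = (\<Prod>i<n. \<integral>\<^sup>+x. ennreal (l x) * indicator (A i) x \<partial>M)"
      by (rule PM.product_nn_integral_prod) (use assms(2) A' in auto)
    also have "\<dots> = (\<Prod>i<n. emeasure (density M l) (A i))"
      by (intro prod.cong refl emeasure_density[symmetric]) (use assms(2) A' in auto)
    finally show "emeasure (density (PiM {..<n} (\<lambda>_. M)) (\<lambda>x. ennreal (\<Prod>i<n. l (x i)))) (PiE {..<n} A) = (\<Prod>i\<in>{..<n}. emeasure (density M l) (A i))" .
  qed
qed

lemma mvt_real:
  fixes f f1 :: "real \<Rightarrow> real"
  assumes "a < b" "{a..b} \<subseteq> S" "\<And>x. a \<le> x \<Longrightarrow> x \<le> b \<Longrightarrow> (f has_real_derivative f1 x) (at x within S)"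
  shows "\<exists>z. a < z \<and> z < b \<and> f b - f a = f1 z * (b - a)"
proof -
  have "\<exists>x\<in>{a<..<b}. f b - f a = (\<lambda>h. f1 x * h) (b - a)"
  proof (rule mvt_simple[OF assms(1)])
    fix x assume "a \<le> x" "x \<le> b"
    hence "(f has_real_derivative f1 x) (at x within {a..b})"
      using assms(2,3) has_field_derivative_subset by blast
    thus "(f has_derivative (\<lambda>h. f1 x * h)) (at x within {a..b})"
      by (simp add: has_field_derivative_def)
  qed
  thus ?thesis by auto
qed

lemma concave_tangent:
  fixes g g1 g2 :: "real \<Rightarrow> real"
  assumes "\<And>x. x \<in> S \<Longrightarrow> (g has_real_derivative g1 x) (at x within S)"
    "\<And>x. x \<in> S \<Longrightarrow> (g1 has_real_derivative g2 x) (at x within S)"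
    "\<And>x. x \<in> S \<Longrightarrow> g2 x \<le> 0"
    "\<And>x y. x \<in> S \<Longrightarrow> y \<in> S \<Longrightarrow> {x..y} \<subseteq> S"
    "x \<in> S" "y \<in> S"
  shows "g y \<le> g x + g1 x * (y - x)"
proof (cases x y rule: linorder_cases)
  case less
  obtain z where z: "x < z" "z < y" "g y - g x = g1 z * (y - x)"
    using mvt_real[OF less assms(4)[OF assms(5,6)], of g g1] assms(1,4,5,6) by fastforce
  have "z \<in> S" using assms(4)[OF assms(5,6)] z by auto
  obtain z' where z': "x < z'" "z' < z" "g1 z - g1 x = g2 z' * (z - x)"
    using mvt_real[OF z(1), of S g1 g2] assms(2,4,5) \<open>z \<in> S\<close> by (metis atLeastAtMost_iff subsetD)
  have "z' \<in> S" using assms(4)[OF assms(5) \<open>z \<in> S\<close>] z' by auto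
  hence "g2 z' * (z - x) \<le> 0" using z' assms(3)[of z'] by (intro mult_nonpos_nonneg) auto
  hence "g1 z \<le> g1 x" using z' by linarith
  hence "g1 z * (y - x) \<le> g1 x * (y - x)" using less by (intro mult_right_mono) auto
  thus ?thesis using z(3) by linarith
next
  case equal thus ?thesis by simp
next
  case greater
  obtain z where z: "y < z" "z < x" "g x - g y = g1 z * (x - y)"
    using mvt_real[OF greater assms(4)[OF assms(6,5)], of g g1] assms(1,4,5,6) by fastforce
  have "z \<in> S" using assms(4)[OF assms(6,5)] z by auto
  obtain z' where z': "z < z'" "z' < x" "g1 x - g1 z = g2 z' * (x - z)"
    using mvt_real[OF z(2), of S g1 g2] assms(2,4,5) \<open>z \<in> S\<close> by (metis atLeastAtMost_iff subsetD)
  have "z' \<in> S" using assms(4)[OF \<open>z \<in> S\<close> assms(5)] z' by auto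
  hence "g2 z' * (x - z) \<le> 0" using z' assms(3)[of z'] by (intro mult_nonpos_nonneg) auto
  hence "g1 x \<le> g1 z" using z' by linarith
  hence "g1 x * (x - y) \<le> g1 z * (x - y)" using greater by (simp add: mult_right_mono)
  thus ?thesis using z by (simp add: algebra_simps)
qed

locale util =
  fixes wl :: real and u u1 u2 :: "real \<Rightarrow> real"
  assumes d1: "\<And>w. w \<ge> wl \<Longrightarrow> (u has_real_derivative u1 w) (at w within {wl..})"
  and d2: "\<And>w. w \<ge> wl \<Longrightarrow> (u1 has_real_derivative u2 w) (at w within {wl..})"
  and pos: "\<And>w. w \<ge> wl \<Longrightarrow> u1 w > 0" and neg: "\<And>w. w \<ge> wl \<Longrightarrow> u2 w < 0"
  and cont: "continuous_on {wl..} u2"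
begin

lemma u_strict: "wl \<le> x \<Longrightarrow> x < y \<Longrightarrow> u x < u y"
proof -
  assume a: "wl \<le> x" "x < y"
  obtain z where "x < z" "z < y" "u y - u x = u1 z * (y - x)"
    using mvt_real[OF a(2), of "{wl..}" u u1] a d1 by force
  moreover have "u1 z > 0" using pos calculation a by auto
  ultimately have "u1 z * (y - x) > 0" using a by (intro mult_pos_pos) auto
  thus ?thesis using \<open>u y - u x = u1 z * (y - x)\<close> by linarith
qed

lemma u_mono: "wl \<le> x \<Longrightarrow> x \<le> y \<Longrightarrow> u x \<le> u y"
  using u_strict by (cases "x = y") (auto simp: order_le_less)

lemma u1_strict: "wl \<le> x \<Longrightarrow> x < y \<Longrightarrow> u1 y < u1 x"
proof -
  assume a: "wl \<le> x" "x < y"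
  obtain z where "x < z" "z < y" "u1 y - u1 x = u2 z * (y - x)"
    using mvt_real[OF a(2), of "{wl..}" u1 u2] a d2 by force
  moreover have "u2 z < 0" using neg calculation a by auto
  ultimately have "u2 z * (y - x) < 0" using a by (intro mult_neg_pos) auto
  thus ?thesis using \<open>u1 y - u1 x = u2 z * (y - x)\<close> by linarith
qed

lemma u1_mono: "wl \<le> x \<Longrightarrow> x \<le> y \<Longrightarrow> u1 y \<le> u1 x"
  using u1_strict by (cases "x = y") (auto simp: order_le_less)

lemma tangent: "wl \<le> x \<Longrightarrow> wl \<le> y \<Longrightarrow> u y \<le> u x + u1 x * (y - x)"
  by (rule concave_tangent[of "{wl..}" u u1 u2]) (use d1 d2 neg in \<open>auto simp: less_imp_le\<close>)

lemma u_cont: "continuous_on {wl..} u"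
proof -
  have "\<And>x. x \<in> {wl..} \<Longrightarrow> continuous (at x within {wl..}) u"
    using d1 DERIV_continuous by blast
  thus ?thesis by (simp add: continuous_on_eq_continuous_within)
qed

lemma quad:
  assumes "w0 > wl"
  shows "\<exists>m>0. \<forall>w. wl \<le> w \<longrightarrow> w \<le> w0 \<longrightarrow> u w \<le> u w0 + u1 w0 * (w - w0) - m * (w - w0)^2"
proof -
  have "continuous_on {wl..w0} u2" using cont by (rule continuous_on_subset) auto
  then obtain z where z: "z \<in> {wl..w0}" "\<And>y. y \<in> {wl..w0} \<Longrightarrow> u2 y \<le> u2 z"
    using continuous_attains_sup[of "{wl..w0}" u2] assms by auto
  define m where "m = - u2 z / 2"
  have m: "m > 0" using neg[of z] z by (simp add: m_def)
  define g where "g w = u w + m * (w - w0)^2" for w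
  define g1 where "g1 w = u1 w + 2 * m * (w - w0)" for w
  define g2 where "g2 w = u2 w + 2 * m" for w
  have D1: "(g has_real_derivative g1 x) (at x within {wl..w0})" if "x \<in> {wl..w0}" for x
  proof -
    have "(u has_real_derivative u1 x) (at x within {wl..w0})"
      using d1[of x] that by (auto intro: has_field_derivative_subset)
    thus ?thesis unfolding g_def g1_def
      by (auto intro!: derivative_eq_intros simp: power2_eq_square algebra_simps)
  qed
  have D2: "(g1 has_real_derivative g2 x) (at x within {wl..w0})" if "x \<in> {wl..w0}" for x
  proof -
    have "(u1 has_real_derivative u2 x) (at x within {wl..w0})"
      using d2[of x] that by (auto intro: has_field_derivative_subset)
    thus ?thesis unfolding g1_def g2_def
      by (auto intro!: derivative_eq_intros)
  qed
  have N: "g2 x \<le> 0" if "x \<in> {wl..w0}" for x using z(2)[OF that] by (simp add: g2_def m_def)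
  show ?thesis
  proof (intro exI[of _ m] conjI allI impI m)
    fix w assume "wl \<le> w" "w \<le> w0"
    hence "g w \<le> g w0 + g1 w0 * (w - w0)"
      using concave_tangent[of "{wl..w0}" g g1 g2 w0 w] D1 D2 N assms by auto
    thus "u w \<le> u w0 + u1 w0 * (w - w0) - m * (w - w0)^2"
      by (simp add: g_def g1_def)
  qed
qed

end

lemma tech:
  assumes mt: "monitoring_tech X A \<mu>" and as: "astar \<in> A" and a: "a \<in> A"
  defines "l \<equiv> \<lambda>x. enn2real (RN_deriv (\<mu> astar) (\<mu> a) x)"
  shows "prob_space (\<mu> astar)" "l \<in> borel_measurable (\<mu> astar)" "\<And>x. l x \<ge> 0"
   "\<mu> a = density (\<mu> astar) (\<lambda>x. ennreal (l x))"
   "\<And>r. r > 0 \<Longrightarrow> integrable (\<mu> astar) (\<lambda>x. l x powr r)"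
   "(\<integral>x. l x \<partial>\<mu> astar) = 1"
   "KL (\<mu> a) (\<mu> astar) = ereal (\<integral>x. l x * ln (l x) \<partial>\<mu> astar)"
   "\<And>n. iid \<mu> a n = density (iid \<mu> astar n) (\<lambda>x. ennreal (\<Prod>i<n. l (x i)))"
proof -
  have ps: "prob_space (\<mu> astar)" "prob_space (\<mu> a)" "sets (\<mu> a) = sets (\<mu> astar)"
    using mt as a unfolding monitoring_tech_def by auto
  have ac: "absolutely_continuous (\<mu> astar) (\<mu> a)" using mt as a unfolding monitoring_tech_def by auto
  interpret M: prob_space "\<mu> astar" by fact
  interpret N: prob_space "\<mu> a" by fact
  show "prob_space (\<mu> astar)" by fact
  show lm: "l \<in> borel_measurable (\<mu> astar)" unfolding l_def by measurable
  show lnn: "\<And>x. l x \<ge> 0" unfolding l_def by simp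
  have "density (\<mu> astar) (RN_deriv (\<mu> astar) (\<mu> a)) = density (\<mu> astar) (\<lambda>x. ennreal (l x))"
  proof (rule density_cong)
    from M.RN_deriv_finite[OF N.sigma_finite_measure_axioms ac ps(3)]
    show "AE x in \<mu> astar. RN_deriv (\<mu> astar) (\<mu> a) x = ennreal (l x)"
      unfolding l_def by eventually_elim (auto simp: less_top)
  qed (use lm in auto)
  thus dens: "\<mu> a = density (\<mu> astar) (\<lambda>x. ennreal (l x))"
    using M.density_RN_deriv[OF ac ps(3)] by simp
  show "integrable (\<mu> astar) (\<lambda>x. l x powr r)" if "r > 0" for r
  proof (rule integrableI_bounded)
    show "(\<lambda>x. l x powr r) \<in> borel_measurable (\<mu> astar)" using lm by measurable
    have "(\<integral>\<^sup>+ x. ennreal (enn2real (RN_deriv (\<mu> astar) (\<mu> a) x) powr r) \<partial>(\<mu> astar)) < \<infinity>"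
      using mt as a that unfolding monitoring_tech_def by blast
    thus "(\<integral>\<^sup>+ x. ennreal (norm (l x powr r)) \<partial>(\<mu> astar)) < \<infinity>"
      unfolding l_def by simp
  qed
  have "(\<integral>x. 1 \<partial>\<mu> a) = (\<integral>x. l x * 1 \<partial>\<mu> astar)"
    by (subst dens) (rule integral_real_density, use lm lnn in auto)
  thus "(\<integral>x. l x \<partial>\<mu> astar) = 1" using N.prob_space by simp
  have "KL (\<mu> a) (\<mu> astar) = ereal (KL_divergence (exp 1) (\<mu> astar) (\<mu> a))"
    unfolding KL_def using ac by simp
  also have "KL_divergence (exp 1) (\<mu> astar) (\<mu> a) = (\<integral>x. l x * log (exp 1) (l x) \<partial>\<mu> astar)"
    by (subst dens) (rule M.KL_density, use lm lnn in auto)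
  also have "\<dots> = (\<integral>x. l x * ln (l x) \<partial>\<mu> astar)" by (simp add: log_def)
  finally show "KL (\<mu> a) (\<mu> astar) = ereal (\<integral>x. l x * ln (l x) \<partial>\<mu> astar)" .
  show "iid \<mu> a n = density (iid \<mu> astar n) (\<lambda>x. ennreal (\<Prod>i<n. l (x i)))" for n
    unfolding iid_def
    by (subst dens, rule PiM_density) (use lm lnn ps dens in auto)
qed

lemma pw_split:
  fixes f L B M0 \<theta> \<gamma> :: real
  assumes "0 \<le> f" "f \<le> B" "L \<ge> 0" "M0 > 0" "\<theta> > 0" "\<gamma> > 0"
  shows "f * L \<le> \<theta> * f^2 / 2 + M0 * L / (2 * \<theta>) + B * (L powr (1 + \<gamma>) / M0 powr \<gamma>)"
proof (cases "L \<le> M0")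
  case True
  have "0 \<le> (\<theta> * f - L)^2" by simp
  hence "2 * \<theta> * (f * L) \<le> \<theta>^2 * f^2 + L^2" by (simp add: power2_eq_square algebra_simps)
  hence "f * L \<le> \<theta> * f^2 / 2 + L^2 / (2 * \<theta>)"
    using assms(5) by (simp add: field_simps power2_eq_square)
  moreover have "L^2 / (2 * \<theta>) \<le> M0 * L / (2 * \<theta>)"
    using True assms by (intro divide_right_mono) (auto simp: power2_eq_square mult_right_mono)
  moreover have "0 \<le> B * (L powr (1 + \<gamma>) / M0 powr \<gamma>)" using assms by simp
  ultimately show ?thesis by linarith
next
  case False
  hence Lp: "L > 0" using assms by simp
  have "1 \<le> (L / M0) powr \<gamma>" using False assms by (intro ge_one_powr_ge_zero) auto
  hence "L \<le> L * (L / M0) powr \<gamma>" using Lp by simp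
  also have "\<dots> = L powr (1 + \<gamma>) / M0 powr \<gamma>" using Lp assms(4)
    by (simp add: powr_add powr_divide)
  finally have "f * L \<le> B * (L powr (1 + \<gamma>) / M0 powr \<gamma>)"
    using assms by (meson Lp less_imp_le mult_mono order.trans)
  moreover have "0 \<le> \<theta> * f^2 / 2 + M0 * L / (2 * \<theta>)" using assms by simp
  ultimately show ?thesis by linarith
qed

locale lr =
  fixes M :: "'x measure" and l :: "'x \<Rightarrow> real"
  assumes ps: "prob_space M" and lm[measurable]: "l \<in> borel_measurable M" and lnn: "\<And>x. l x \<ge> 0"
    and lint: "\<And>r. r > 0 \<Longrightarrow> integrable M (\<lambda>x. l x powr r)" and l1: "(\<integral>x. l x \<partial>M) = 1"
begin

lemma lpow_prod: "(\<Prod>i<(n::nat). l (x i)) powr r = (\<Prod>i<n. l (x i) powr r)"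
  by (metis prod_powr_distrib lnn)

lemma l_int: "integrable M l"
proof -
  have "integrable M (\<lambda>x. l x powr 1)" using lint[of 1] by simp
  moreover have "\<And>x. l x powr 1 = l x" using lnn by (metis powr_one powr_zero_eq_one order_le_less)
  ultimately show ?thesis by simp
qed

lemma Lmeas[measurable]: "(\<lambda>x. \<Prod>i<(n::nat). l (x i)) \<in> borel_measurable (PiM {..<n} (\<lambda>_. M))"
  by measurable

lemma L_int: "integrable (PiM {..<(n::nat)} (\<lambda>_. M)) (\<lambda>x. \<Prod>i<n. l (x i))"
  "(\<integral>x. (\<Prod>i<n. l (x i)) \<partial>PiM {..<n} (\<lambda>_. M)) = 1"
  using prod_int[OF ps lm _ l_int, of n] l1 lnn by auto

lemma Lpow_int: "r > 0 \<Longrightarrow> integrable (PiM {..<(n::nat)} (\<lambda>_. M)) (\<lambda>x. (\<Prod>i<n. l (x i)) powr r)"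
  "r > 0 \<Longrightarrow> (\<integral>x. (\<Prod>i<n. l (x i)) powr r \<partial>PiM {..<n} (\<lambda>_. M)) = (\<integral>x. l x powr r \<partial>M) ^ n"
  unfolding lpow_prod using prod_int[OF ps _ _ lint[of r], of n] lm by auto

lemma P_prob: "prob_space (PiM {..<(n::nat)} (\<lambda>_. M))"
  by (rule prob_space_PiM) (simp add: ps)

lemma markov:
  assumes "T > 0"
  shows "measure (PiM {..<(n::nat)} (\<lambda>_. M)) {x\<in>space (PiM {..<n} (\<lambda>_. M)). (\<Prod>i<n. l (x i)) > T} \<le> 1 / T"
proof -
  let ?P = "PiM {..<n} (\<lambda>_. M)"
  interpret P: prob_space ?P by (rule P_prob)
  have "measure ?P {x\<in>space ?P. (\<Prod>i<n. l (x i)) > T} \<le> measure ?P {x\<in>space ?P. (\<Prod>i<n. l (x i)) \<ge> T}"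
  proof (rule P.finite_measure_mono)
    show "{x\<in>space ?P. (\<Prod>i<n. l (x i)) \<ge> T} \<in> sets ?P" by measurable
  qed auto
  also have "\<dots> \<le> (\<integral>x. (\<Prod>i<n. l (x i)) \<partial>?P) / T"
    by (rule integral_Markov_inequality_measure[OF L_int(1)]) (use assms lnn in \<open>auto intro!: prod_nonneg\<close>)
  finally show ?thesis using L_int(2) by simp
qed

lemma small_q:
  assumes "T > 0" "0 < \<beta>" "\<beta> < 1" "S \<in> sets (PiM {..<(n::nat)} (\<lambda>_. M))"
    "\<And>x. x \<in> S \<Longrightarrow> (\<Prod>i<n. l (x i)) \<le> T"
  shows "measure (density (PiM {..<n} (\<lambda>_. M)) (\<lambda>x. ennreal (\<Prod>i<n. l (x i)))) S
          \<le> T powr \<beta> * (\<integral>x. l x powr (1 - \<beta>) \<partial>M) ^ n"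
proof -
  let ?P = "PiM {..<n} (\<lambda>_. M)" and ?L = "\<lambda>x. \<Prod>i<n. l (x i)"
  interpret P: prob_space ?P by (rule P_prob)
  have Lnn: "\<And>x. ?L x \<ge> 0" using lnn by (simp add: prod_nonneg)
  have "S \<inter> space ?P = S" using sets.sets_into_space[OF assms(4)] by auto
  hence "measure (density ?P ?L) S = (\<integral>x. indicator S x \<partial>density ?P ?L)"
    by simp
  also have "\<dots> = (\<integral>x. ?L x * indicator S x \<partial>?P)"
    by (rule integral_real_density) (use Lnn assms(4) in auto)
  also have "\<dots> \<le> (\<integral>x. T powr \<beta> * ?L x powr (1 - \<beta>) \<partial>?P)"
  proof (rule integral_mono)
    show "integrable ?P (\<lambda>x. ?L x * indicator S x)"
      using integrable_mult_indicator[OF assms(4) L_int(1)] by (simp add: mult.commute)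
    show "integrable ?P (\<lambda>x. T powr \<beta> * ?L x powr (1 - \<beta>))"
      using Lpow_int(1)[of "1 - \<beta>"] assms by simp
    fix x show "?L x * indicator S x \<le> T powr \<beta> * ?L x powr (1 - \<beta>)"
    proof (cases "x \<in> S")
      case True
      have "?L x = ?L x powr \<beta> * ?L x powr (1 - \<beta>)"
      proof (cases "?L x = 0")
        case False
        hence "?L x > 0" using Lnn[of x] by linarith
        hence "?L x powr \<beta> * ?L x powr (1 - \<beta>) = ?L x powr (\<beta> + (1 - \<beta>))"
          by (simp only: powr_add)
        also have "\<dots> = ?L x" using \<open>?L x > 0\<close> by simp
        finally show ?thesis by simp
      next
        case True
        have z: "\<And>r. ?L x powr r = 0" by (simp only: powr_def True) simp
        show ?thesis by (simp only: z True) simp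
      qed
      also have "\<dots> \<le> T powr \<beta> * ?L x powr (1 - \<beta>)"
        using True assms Lnn[of x] by (intro mult_right_mono powr_mono2) auto
      finally show ?thesis using True by simp
    qed (simp)
  qed
  also have "\<dots> = T powr \<beta> * (\<integral>x. l x powr (1 - \<beta>) \<partial>M) ^ n"
    using Lpow_int(2)[of "1 - \<beta>"] assms by simp
  finally show ?thesis .
qed

lemma lower_key:
  fixes f :: "(nat \<Rightarrow> 'x) \<Rightarrow> real" and B M0 \<theta> \<gamma> :: real and n :: nat
  assumes f[measurable]: "f \<in> borel_measurable (PiM {..<(n::nat)} (\<lambda>_. M))"
    and fb: "\<And>x. x \<in> space (PiM {..<n} (\<lambda>_. M)) \<Longrightarrow> 0 \<le> f x \<and> f x \<le> B"
    and pos: "M0 > 0" "\<theta> > 0" "\<gamma> > 0"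
  shows "(\<integral>x. f x \<partial>density (PiM {..<n} (\<lambda>_. M)) (\<lambda>x. ennreal (\<Prod>i<n. l (x i))))
         \<le> \<theta> / 2 * (\<integral>x. (f x)^2 \<partial>PiM {..<n} (\<lambda>_. M)) + M0 / (2 * \<theta>)
           + B * ((\<integral>x. l x powr (1 + \<gamma>) \<partial>M) ^ n / M0 powr \<gamma>)"
proof -
  let ?P = "PiM {..<n} (\<lambda>_. M)" and ?L = "\<lambda>x. \<Prod>i<n. l (x i)"
  interpret P: prob_space ?P by (rule P_prob)
  have Lnn: "\<And>x. ?L x \<ge> 0" using lnn by (simp add: prod_nonneg)
  have B0: "B \<ge> 0" using fb[of "SOME x. x \<in> space ?P"] P.not_empty some_in_eq by fastforce
  have i1: "integrable ?P (\<lambda>x. (f x)^2)"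
    by (rule P.integrable_const_bound[where B="B^2"]) (use fb in \<open>auto intro!: AE_I2 power_mono\<close>)
  have i2: "integrable ?P (\<lambda>x. ?L x powr (1 + \<gamma>))" using Lpow_int(1)[of "1+\<gamma>"] pos by simp
  have i3: "integrable ?P (\<lambda>x. ?L x * f x)"
  proof -
    have iB: "integrable ?P (\<lambda>x. B * ?L x)" using L_int(1) by simp
    show ?thesis
  proof (rule Bochner_Integration.integrable_bound[OF iB])
    show "(\<lambda>x. ?L x * f x) \<in> borel_measurable ?P" by measurable
    show "AE x in ?P. norm (?L x * f x) \<le> norm (B * ?L x)"
    proof (intro AE_I2)
      fix x assume "x \<in> space ?P"
      hence "f x * ?L x \<le> B * ?L x" using fb Lnn by (intro mult_right_mono) auto
      thus "norm (?L x * f x) \<le> norm (B * ?L x)" using fb[OF \<open>x \<in> space ?P\<close>] Lnn[of x] B0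
        by (simp add: abs_mult mult.commute)
    qed
  qed
  qed
  have "(\<integral>x. f x \<partial>density ?P ?L) = (\<integral>x. ?L x * f x \<partial>?P)"
    by (rule integral_real_density) (use Lnn in auto)
  also have "\<dots> \<le> (\<integral>x. \<theta> / 2 * (f x)^2 + M0 / (2 * \<theta>) * ?L x + B / M0 powr \<gamma> * ?L x powr (1 + \<gamma>) \<partial>?P)"
  proof (rule integral_mono[OF i3])
    show "integrable ?P (\<lambda>x. \<theta> / 2 * (f x)^2 + M0 / (2 * \<theta>) * ?L x + B / M0 powr \<gamma> * ?L x powr (1 + \<gamma>))"
      using i1 i2 L_int(1) by auto
    fix x assume "x \<in> space ?P"
    from pw_split[of "f x" B "?L x" M0 \<theta> \<gamma>] fb[OF this] Lnn[of x] pos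
    show "?L x * f x \<le> \<theta> / 2 * (f x)^2 + M0 / (2 * \<theta>) * ?L x + B / M0 powr \<gamma> * ?L x powr (1 + \<gamma>)"
      by (simp add: mult.commute)
  qed
  also have "\<dots> = \<theta> / 2 * (\<integral>x. (f x)^2 \<partial>?P) + M0 / (2 * \<theta>) * (\<integral>x. ?L x \<partial>?P)
      + B / M0 powr \<gamma> * (\<integral>x. ?L x powr (1 + \<gamma>) \<partial>?P)"
    using i1 i2 L_int(1) by simp
  also have "\<dots> = \<theta> / 2 * (\<integral>x. (f x)^2 \<partial>?P) + M0 / (2 * \<theta>)
           + B * ((\<integral>x. l x powr (1 + \<gamma>) \<partial>M) ^ n / M0 powr \<gamma>)"
    using L_int(2) Lpow_int(2)[of "1+\<gamma>"] pos by simp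
  finally show ?thesis .
qed

end

locale econ = util wl u u1 u2 for wl u u1 u2 +
  fixes c :: "'a \<Rightarrow> real" and A :: "'a set" and astar :: 'a and w0 :: real
  assumes finA: "finite A" and asA: "astar \<in> A" and w0: "w0 > wl" and uw0: "u w0 = c astar"
    and cgt: "\<And>a. a \<in> A \<Longrightarrow> c a > u wl"
    and cne: "\<And>a. a \<in> A \<Longrightarrow> a \<noteq> astar \<Longrightarrow> c a \<noteq> c astar"
begin

lemma pw_T:
  assumes m: "\<And>w. wl \<le> w \<Longrightarrow> w \<le> w0 \<Longrightarrow> u w \<le> u w0 + u1 w0 * (w - w0) - m * (w - w0)^2"
    and "w \<ge> wl"
  shows "u w \<le> c astar + u1 w0 * (w - w0) - m * (min (w - w0) 0)^2"
proof (cases "w \<le> w0")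
  case True thus ?thesis using m[of w] assms(2) uw0 by (simp add: min_def)
next
  case False thus ?thesis using tangent[of w0 w] w0 uw0 by (simp add: min_def)
qed

lemma pw_f:
  assumes "w \<ge> wl"
  shows "max (c astar - u w) 0 \<le> u1 wl * (- min (w - w0) 0)"
proof (cases "w \<le> w0")
  case True
  have "u w0 \<le> u w + u1 w * (w0 - w)" using tangent[of w w0] assms w0 by simp
  moreover have "u1 w * (w0 - w) \<le> u1 wl * (w0 - w)" using True assms u1_mono[of wl w]
    by (intro mult_right_mono) auto
  moreover have "0 \<le> u1 wl * (w0 - w)" using True pos[of wl] by simp
  ultimately show ?thesis using True uw0 by (simp add: min_def)
next
  case False thus ?thesis using u_strict[of w0 w] w0 uw0 by (simp add: min_def)
qed

lemma lower_bound:
  fixes X :: "'x::euclidean_space set" and \<mu> :: "'a \<Rightarrow> 'x measure" and a :: 'a and \<gamma> s :: real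
  assumes mt: "monitoring_tech X A \<mu>" and a: "a \<in> A" and ca: "c a < c astar"
    and \<gamma>: "\<gamma> > 0"
    and I: "(\<integral>x. enn2real (RN_deriv (\<mu> astar) (\<mu> a) x) powr (1 + \<gamma>) \<partial>\<mu> astar) < exp (\<gamma> * s)"
  shows "\<exists>D>0. \<exists>C>0. \<forall>\<^sub>F n in sequentially. \<forall>w. contract_ok wl u c A astar \<mu> n w \<longrightarrow>
            (\<integral>x. w x \<partial>iid \<mu> astar n) \<ge> w0 + min D (C * exp (- s * real n))"
proof -
  define l where "l = (\<lambda>x. enn2real (RN_deriv (\<mu> astar) (\<mu> a) x))"
  have lrI: "lr (\<mu> astar) l" unfolding lr_def l_def using tech[OF mt asA a] by blast
  interpret lr "\<mu> astar" l by (rule lrI)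
  define \<Delta> where "\<Delta> = c astar - c a"
  have \<Delta>: "\<Delta> > 0" using ca by (simp add: \<Delta>_def)
  define B where "B = c astar - u wl"
  have B: "B > 0" using cgt[OF a] ca by (simp add: B_def)
  obtain m where m: "m > 0" "\<And>w. wl \<le> w \<Longrightarrow> w \<le> w0 \<Longrightarrow> u w \<le> u w0 + u1 w0 * (w - w0) - m * (w - w0)^2"
    using quad[OF w0] by auto
  define D where "D = \<Delta> / (2 * u1 w0)"
  define C where "C = m * \<Delta>^2 / (8 * (u1 wl)^2 * u1 w0)"
  have u1p: "u1 w0 > 0" "u1 wl > 0" using pos w0 by auto
  have D: "D > 0" using \<Delta> u1p by (simp add: D_def)
  have C: "C > 0" using \<Delta> u1p m by (simp add: C_def)
  define Ig where "Ig = (\<integral>x. l x powr (1 + \<gamma>) \<partial>\<mu> astar)"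
  define r where "r = Ig / exp (\<gamma> * s)"
  have Ig0: "Ig \<ge> 0" unfolding Ig_def by (intro integral_nonneg_AE) auto
  have r: "0 \<le> r" "r < 1" using I Ig0 by (auto simp: r_def Ig_def l_def)
  have "(\<lambda>n. B * r ^ n) \<longlonglongrightarrow> B * 0" using r by (intro tendsto_mult tendsto_const LIMSEQ_power_zero) auto
  hence ev: "\<forall>\<^sub>F n in sequentially. B * r ^ n < \<Delta> / 8" using \<Delta> by (intro order_tendstoD(2)) auto
  show ?thesis
  proof (rule exI[of _ D], rule conjI[OF D], rule exI[of _ C], rule conjI[OF C], rule eventually_mono[OF ev], intro allI impI)
    fix n w assume rn: "B * r ^ n < \<Delta> / 8" and ok: "contract_ok wl u c A astar \<mu> n w"
    let ?P = "PiM {..<n} (\<lambda>_. \<mu> astar)"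
    let ?L = "\<lambda>x. \<Prod>i<n. l (x i)"
    let ?Q = "density ?P (\<lambda>x. ennreal (?L x))"
    have Pd: "iid \<mu> astar n = ?P" by (simp add: iid_def)
    have Qd: "iid \<mu> a n = ?Q" unfolding l_def using tech(8)[OF mt asA a, of n] by (simp only: iid_def)
    interpret P: prob_space ?P by (rule P_prob)
    have Qps: "prob_space ?Q" unfolding Qd[symmetric] iid_def
      by (rule prob_space_PiM) (use mt a in \<open>auto simp: monitoring_tech_def\<close>)
    interpret Q: prob_space ?Q by (rule Qps)
    have okA: "w \<in> borel_measurable (iid \<mu> astar n)" "\<And>x. x \<in> space (iid \<mu> astar n) \<Longrightarrow> w x \<ge> wl"
      "integrable (iid \<mu> astar n) w" "integrable (iid \<mu> astar n) (\<lambda>x. u (w x))"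
      "integrable (iid \<mu> a n) (\<lambda>x. u (w x))"
      "(\<integral>x. u (w x) \<partial>iid \<mu> astar n) - c astar \<ge> (\<integral>x. u (w x) \<partial>iid \<mu> a n) - c a"
      "(\<integral>x. u (w x) \<partial>iid \<mu> astar n) - c astar \<ge> 0"
      using ok a asA unfolding contract_ok_def by auto
    have wm[measurable]: "w \<in> borel_measurable ?P" and wl': "\<And>x. x \<in> space ?P \<Longrightarrow> w x \<ge> wl"
      and wi: "integrable ?P w" and uiP: "integrable ?P (\<lambda>x. u (w x))"
      and uiQ: "integrable ?Q (\<lambda>x. u (w x))"
      and IC: "(\<integral>x. u (w x) \<partial>?P) - c astar \<ge> (\<integral>x. u (w x) \<partial>?Q) - c a"
      and IR: "(\<integral>x. u (w x) \<partial>?P) - c astar \<ge> 0"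
      using okA by (simp_all only: Qd Pd)
    have uwm[measurable]: "(\<lambda>x. u (w x)) \<in> borel_measurable ?P" using uiP by auto
    define W where "W = (\<integral>x. w x \<partial>?P)"
    define EU where "EU = (\<integral>x. u (w x) \<partial>?P)"
    define g where "g x = min (w x - w0) 0" for x
    have gm[measurable]: "g \<in> borel_measurable ?P" unfolding g_def by measurable
    have gi: "integrable ?P (\<lambda>x. (g x)^2)"
    proof (rule P.integrable_const_bound[where B="(w0 - wl)^2"])
      show "AE x in ?P. norm ((g x)^2) \<le> (w0 - wl)^2"
      proof (intro AE_I2)
        fix x assume "x \<in> space ?P"
        hence "\<bar>g x\<bar> \<le> w0 - wl" using wl'[of x] w0 by (auto simp: g_def min_def)
        hence "\<bar>g x\<bar>^2 \<le> (w0 - wl)^2" by (intro power_mono) auto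
        thus "norm ((g x)^2) \<le> (w0 - wl)^2" by simp
      qed
    qed simp
    have main: "EU \<le> c astar + u1 w0 * (W - w0) - m * (\<integral>x. (g x)^2 \<partial>?P)"
    proof -
      have "EU \<le> (\<integral>x. c astar + u1 w0 * (w x - w0) - m * (g x)^2 \<partial>?P)"
        unfolding EU_def
      proof (rule integral_mono[OF uiP])
        show "integrable ?P (\<lambda>x. c astar + u1 w0 * (w x - w0) - m * (g x)^2)"
          using wi gi by auto
        fix x assume "x \<in> space ?P"
        thus "u (w x) \<le> c astar + u1 w0 * (w x - w0) - m * (g x)^2"
          unfolding g_def by (intro pw_T[OF m(2)] wl')
      qed
      also have "\<dots> = c astar + u1 w0 * (W - w0) - m * (\<integral>x. (g x)^2 \<partial>?P)"
        using wi gi P.prob_space by (simp add: W_def algebra_simps)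
      finally show ?thesis .
    qed
    have g2nn: "(\<integral>x. (g x)^2 \<partial>?P) \<ge> 0" by (intro integral_nonneg_AE) auto
    show "(\<integral>x. w x \<partial>iid \<mu> astar n) \<ge> w0 + min D (C * exp (- s * real n))"
    proof (cases "EU - c astar \<ge> \<Delta> / 2")
      case True
      have "u1 w0 * (W - w0) \<ge> \<Delta> / 2" using main True g2nn m(1)
        by (smt (verit) mult_nonneg_nonneg)
      hence "\<Delta> / 2 / u1 w0 \<le> W - w0" using u1p by (simp add: divide_le_eq mult_ac)
      hence "W - w0 \<ge> D" by (simp add: D_def)
      thus ?thesis unfolding Pd W_def[symmetric] by linarith
    next
      case False
      define f where "f x = max (c astar - u (w x)) 0" for x
      have fm[measurable]: "f \<in> borel_measurable ?P" unfolding f_def by measurable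
      have fb: "\<And>x. x \<in> space ?P \<Longrightarrow> 0 \<le> f x \<and> f x \<le> B"
        using wl' u_mono[of wl] B by (auto simp: f_def B_def)
      have fQ: "integrable ?Q f"
        by (rule Q.integrable_const_bound[where B=B]) (use fb in \<open>auto intro!: AE_I2\<close>)
      have "(\<integral>x. u (w x) \<partial>?Q) < c astar - \<Delta> / 2" using IC False unfolding EU_def \<Delta>_def by argo
      moreover have "(\<integral>x. f x \<partial>?Q) \<ge> (\<integral>x. c astar - u (w x) \<partial>?Q)"
        by (rule integral_mono[OF _ fQ]) (use uiQ in \<open>auto simp: f_def\<close>)
      moreover have "(\<integral>x. c astar - u (w x) \<partial>?Q) = c astar - (\<integral>x. u (w x) \<partial>?Q)"
        using uiQ Q.prob_space by simp
      ultimately have fQ2: "(\<integral>x. f x \<partial>?Q) > \<Delta> / 2" by linarith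
      define M0 where "M0 = exp (s * real n)"
      have M0: "M0 > 0" by (simp add: M0_def)
      define \<theta> where "\<theta> = 4 * M0 / \<Delta>"
      have \<theta>: "\<theta> > 0" using M0 \<Delta> by (simp add: \<theta>_def)
      have "(\<integral>x. f x \<partial>?Q) \<le> \<theta> / 2 * (\<integral>x. (f x)^2 \<partial>?P) + M0 / (2 * \<theta>)
           + B * ((\<integral>x. l x powr (1 + \<gamma>) \<partial>\<mu> astar) ^ n / M0 powr \<gamma>)"
        by (rule lower_key[OF fm fb M0 \<theta> \<gamma>])
      moreover have "M0 / (2 * \<theta>) = \<Delta> / 8" using M0 \<Delta> by (simp add: \<theta>_def field_simps)
      moreover have "B * ((\<integral>x. l x powr (1 + \<gamma>) \<partial>\<mu> astar) ^ n / M0 powr \<gamma>) = B * r ^ n"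
      proof -
        have "M0 powr \<gamma> = exp (\<gamma> * s) ^ n"
          by (simp add: M0_def powr_def exp_of_nat_mult[symmetric] algebra_simps)
        thus ?thesis by (simp add: r_def Ig_def power_divide)
      qed
      ultimately have "\<Delta> / 2 < \<theta> / 2 * (\<integral>x. (f x)^2 \<partial>?P) + \<Delta> / 8 + \<Delta> / 8"
        using fQ2 rn by linarith
      hence f2: "(\<integral>x. (f x)^2 \<partial>?P) > \<Delta>^2 / (8 * M0)"
        using \<Delta> M0 by (simp add: \<theta>_def field_simps power2_eq_square)
      have fi2: "integrable ?P (\<lambda>x. (f x)^2)"
        by (rule P.integrable_const_bound[where B="B^2"]) (use fb in \<open>auto intro!: AE_I2 power_mono\<close>)
      have "(\<integral>x. (f x)^2 \<partial>?P) \<le> (\<integral>x. (u1 wl)^2 * (g x)^2 \<partial>?P)"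
      proof (rule integral_mono[OF fi2])
        show "integrable ?P (\<lambda>x. (u1 wl)^2 * (g x)^2)" using gi by simp
        fix x assume "x \<in> space ?P"
        hence "f x \<le> u1 wl * (- g x)" "0 \<le> f x" using pw_f[OF wl'] fb by (auto simp: f_def g_def)
        hence "(f x)^2 \<le> (u1 wl * (- g x))^2" by (intro power_mono) auto
        thus "(f x)^2 \<le> (u1 wl)^2 * (g x)^2" by (simp add: power_mult_distrib)
      qed
      hence "(u1 wl)^2 * (\<integral>x. (g x)^2 \<partial>?P) > \<Delta>^2 / (8 * M0)" using f2 by simp
      hence "(\<Delta>^2 / (8 * M0)) / (u1 wl)^2 < (\<integral>x. (g x)^2 \<partial>?P)"
      proof -
        have u2p: "(u1 wl)^2 > 0" using u1p by simp
        show ?thesis using \<open>(u1 wl)^2 * (\<integral>x. (g x)^2 \<partial>?P) > \<Delta>^2 / (8 * M0)\<close>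
          by (subst pos_divide_less_eq[OF u2p]) (simp add: mult.commute)
      qed
      hence "(\<integral>x. (g x)^2 \<partial>?P) > \<Delta>^2 / (8 * M0 * (u1 wl)^2)"
        by (simp add: divide_divide_eq_left)
      hence "m * (\<integral>x. (g x)^2 \<partial>?P) > m * (\<Delta>^2 / (8 * M0 * (u1 wl)^2))"
        using m(1) by (simp only: mult_strict_left_mono)
      moreover have "u1 w0 * (W - w0) \<ge> m * (\<integral>x. (g x)^2 \<partial>?P)"
        using main IR unfolding EU_def by linarith
      ultimately have "u1 w0 * (W - w0) > m * (\<Delta>^2 / (8 * M0 * (u1 wl)^2))" by linarith
      hence "W - w0 > C / M0" using u1p M0 by (simp add: C_def field_simps)
      moreover have "C / M0 = C * exp (- s * real n)" by (simp add: M0_def exp_minus field_simps)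
      ultimately show ?thesis unfolding Pd W_def[symmetric] by linarith
    qed
  qed
qed

end

lemma int_ind:
  assumes "prob_space N" "S \<in> sets N"
  shows "(\<integral>x. \<alpha> + \<beta> * indicator S x \<partial>N) = \<alpha> + \<beta> * measure N S"
    "integrable N (\<lambda>x. \<alpha> + \<beta> * indicator S x :: real)"
proof -
  interpret prob_space N by fact
  have "S \<inter> space N = S" using sets.sets_into_space[OF assms(2)] by auto
  have i0: "integrable N (indicator S :: _ \<Rightarrow> real)"
  proof (rule integrable_real_indicator[OF assms(2)])
    show "emeasure N S < \<infinity>" using emeasure_eq_measure[of S] by simp
  qed
  hence i: "integrable N (\<lambda>x. \<beta> * indicator S x :: real)" by simp
  have "(\<integral>x. \<alpha> + \<beta> * indicator S x \<partial>N) = (\<integral>x. \<alpha> \<partial>N) + (\<integral>x. \<beta> * indicator S x \<partial>N)"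
    by (rule Bochner_Integration.integral_add) (use i in auto)
  also have "\<dots> = \<alpha> + \<beta> * measure N S" using \<open>S \<inter> space N = S\<close> prob_space by simp
  finally show "(\<integral>x. \<alpha> + \<beta> * indicator S x \<partial>N) = \<alpha> + \<beta> * measure N S" .
  show "integrable N (\<lambda>x. \<alpha> + \<beta> * indicator S x :: real)"
    using i by simp
qed

lemma card_two:
  assumes "S \<subseteq> Sp" "S \<noteq> {}" "S \<noteq> Sp" "a \<noteq> b"
  shows "card ((\<lambda>x. a + (b - a) * indicator S x :: real) ` Sp) = 2"
proof -
  have "(\<lambda>x. a + (b - a) * indicator S x :: real) ` Sp = {a, b}"
  proof
    show "(\<lambda>x. a + (b - a) * indicator S x) ` Sp \<subseteq> {a, b}" by (auto simp: indicator_def)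
    obtain x where "x \<in> S" using assms(2) by auto
    moreover obtain y where "y \<in> Sp" "y \<notin> S" using assms(1,3) by auto
    ultimately show "{a, b} \<subseteq> (\<lambda>x. a + (b - a) * indicator S x) ` Sp"
      using assms(1) by (auto simp: image_iff indicator_def intro!: bexI)
  qed
  thus ?thesis using assms(4) by simp
qed

context econ begin

lemma upper_bound:
  fixes X :: "'x::euclidean_space set" and \<mu> :: "'a \<Rightarrow> 'x measure" and \<tau> :: real
  assumes mt: "monitoring_tech X A \<mu>" and ne: "{a\<in>A. c a < c astar} \<noteq> {}" and \<tau>0: "\<tau> > 0"
    and K: "\<And>a. a \<in> A \<Longrightarrow> c a < c astar \<Longrightarrow> \<tau> < (\<integral>x. enn2real (RN_deriv (\<mu> astar) (\<mu> a) x) * ln (enn2real (RN_deriv (\<mu> astar) (\<mu> a) x)) \<partial>\<mu> astar)"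
  shows "\<exists>C. \<forall>\<^sub>F n in sequentially. \<exists>w. contract_ok wl u c A astar \<mu> n w \<and>
            card (w ` space (iid \<mu> astar n)) = 2 \<and> (\<integral>x. w x \<partial>iid \<mu> astar n) \<le> w0 + C * exp (- \<tau> * real n)"
proof -
  define Am where "Am = {a\<in>A. c a < c astar}"
  have finAm: "finite Am" using finA by (simp add: Am_def)
  have AmA: "Am \<subseteq> A" by (auto simp: Am_def)
  have Amne: "Am \<noteq> {}" using ne by (simp add: Am_def)
  define l where "l a = (\<lambda>x. enn2real (RN_deriv (\<mu> astar) (\<mu> a) x))" for a
  have lrI: "lr (\<mu> astar) (l a)" if "a \<in> A" for a
    unfolding lr_def l_def using tech[OF mt asA that] by blast
  have "\<forall>a\<in>Am. \<exists>b. 0 < b \<and> b < 1 \<and> (\<integral>x. l a x powr (1 - b) \<partial>\<mu> astar) < exp (- b * \<tau>)"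
  proof
    fix a assume a: "a \<in> Am"
    hence aA: "a \<in> A" by (simp add: Am_def)
    interpret lr "\<mu> astar" "l a" by (rule lrI[OF aA])
    show "\<exists>b. 0 < b \<and> b < 1 \<and> (\<integral>x. l a x powr (1 - b) \<partial>\<mu> astar) < exp (- b * \<tau>)"
      by (rule renyi_sides(1)[OF ps lm _ lint l1]) (use lnn K[OF aA] a in \<open>auto simp: l_def Am_def\<close>)
  qed
  then obtain \<beta> where \<beta>: "\<And>a. a \<in> Am \<Longrightarrow> 0 < \<beta> a \<and> \<beta> a < 1 \<and> (\<integral>x. l a x powr (1 - \<beta> a) \<partial>\<mu> astar) < exp (- \<beta> a * \<tau>)"
    by metis
  define \<rho> where "\<rho> a = exp (\<beta> a * \<tau>) * (\<integral>x. l a x powr (1 - \<beta> a) \<partial>\<mu> astar)" for a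
  have \<rho>: "0 \<le> \<rho> a \<and> \<rho> a < 1" if "a \<in> Am" for a
  proof -
    have "0 \<le> (\<integral>x. l a x powr (1 - \<beta> a) \<partial>\<mu> astar)" by (intro integral_nonneg_AE) auto
    moreover have "exp (\<beta> a * \<tau>) * exp (- \<beta> a * \<tau>) = 1" by (simp flip: exp_add)
    ultimately show ?thesis using \<beta>[OF that] unfolding \<rho>_def
      by (smt (verit, best) exp_gt_zero mult_less_cancel_left_pos mult_nonneg_nonneg)
  qed
  define \<epsilon> where "\<epsilon> n = real (card Am) * exp (- \<tau> * real n)" for n :: nat
  have \<epsilon>0: "\<epsilon> n \<ge> 0" for n by (simp add: \<epsilon>_def)
  have \<epsilon>lim: "\<epsilon> \<longlonglongrightarrow> 0"
  proof -
    have "(\<lambda>n. exp (- \<tau> * real n)) \<longlonglongrightarrow> 0" using \<tau>0 by real_asymp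
    thus ?thesis unfolding \<epsilon>_def using tendsto_mult_right_zero by blast
  qed
  define B0 where "B0 = c astar - u wl"
  have B0: "B0 > 0"
  proof -
    obtain a where "a \<in> A" "c a < c astar" using ne by auto
    thus ?thesis using cgt[of a] by (simp add: B0_def)
  qed
  have u1p: "u1 (w0 + 1) > 0" using pos w0 by simp
  define \<kappa> where "\<kappa> = 2 * B0 / u1 (w0 + 1)"
  have \<kappa>: "\<kappa> > 0" using B0 u1p by (simp add: \<kappa>_def)
  define H where "H = u (w0 + 1) - u wl"
  have ev1: "\<forall>\<^sub>F n in sequentially. \<epsilon> n \<le> 1/2 \<and> \<kappa> * \<epsilon> n \<le> 1"
  proof -
    have "\<forall>\<^sub>F n in sequentially. \<epsilon> n < 1/2" by (rule order_tendstoD(2)[OF \<epsilon>lim]) simp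
    moreover have "(\<lambda>n. \<kappa> * \<epsilon> n) \<longlonglongrightarrow> \<kappa> * 0" by (intro tendsto_mult tendsto_const \<epsilon>lim)
    hence "\<forall>\<^sub>F n in sequentially. \<kappa> * \<epsilon> n < 1" by (intro order_tendstoD(2)) auto
    ultimately show ?thesis by eventually_elim auto
  qed
  have ev2: "\<forall>\<^sub>F n in sequentially. \<forall>a\<in>Am. \<epsilon> n + \<rho> a ^ n \<le> (c a - u wl) / B0"
  proof (rule eventually_ball_finite[OF finAm], intro ballI)
    fix a assume a: "a \<in> Am"
    have "(\<lambda>n. \<epsilon> n + \<rho> a ^ n) \<longlonglongrightarrow> 0 + 0"
      using \<rho>[OF a] by (intro tendsto_add \<epsilon>lim LIMSEQ_power_zero) auto
    moreover have "(c a - u wl) / B0 > 0" using cgt[of a] a B0 by (auto simp: Am_def)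
    ultimately have "\<forall>\<^sub>F n in sequentially. \<epsilon> n + \<rho> a ^ n < (c a - u wl) / B0"
      by (intro order_tendstoD(2)) auto
    thus "\<forall>\<^sub>F n in sequentially. \<epsilon> n + \<rho> a ^ n \<le> (c a - u wl) / B0" by eventually_elim auto
  qed
  have ev3: "\<forall>\<^sub>F n in sequentially. \<forall>a\<in>A. c a > c astar \<longrightarrow> \<epsilon> n * H \<le> c a - c astar"
  proof (rule eventually_ball_finite[OF finA], intro ballI)
    fix a assume a: "a \<in> A"
    show "\<forall>\<^sub>F n in sequentially. c a > c astar \<longrightarrow> \<epsilon> n * H \<le> c a - c astar"
    proof (cases "c a > c astar")
      case True
      have "(\<lambda>n. \<epsilon> n * H) \<longlonglongrightarrow> 0 * H" by (intro tendsto_mult tendsto_const \<epsilon>lim)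
      hence "\<forall>\<^sub>F n in sequentially. \<epsilon> n * H < c a - c astar" using True by (intro order_tendstoD(2)) auto
      thus ?thesis by eventually_elim auto
    qed simp
  qed
  show ?thesis
  proof (rule exI[of _ "\<kappa> * real (card Am)"], rule eventually_mono[OF eventually_conj[OF ev1 eventually_conj[OF ev2 ev3]]])
    fix n assume evn: "(\<epsilon> n \<le> 1/2 \<and> \<kappa> * \<epsilon> n \<le> 1) \<and> (\<forall>a\<in>Am. \<epsilon> n + \<rho> a ^ n \<le> (c a - u wl) / B0) \<and>
      (\<forall>a\<in>A. c a > c astar \<longrightarrow> \<epsilon> n * H \<le> c a - c astar)"
    let ?P = "PiM {..<n} (\<lambda>_. \<mu> astar)"
    interpret P: prob_space ?P by (rule lr.P_prob[OF lrI[OF asA]])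
    have Pd: "iid \<mu> astar n = ?P" by (simp add: iid_def)
    have setsX: "sets (\<mu> b) = sets (\<mu> astar)" if "b \<in> A" for b
      using mt that asA unfolding monitoring_tech_def by metis
    have setsb: "sets (iid \<mu> b n) = sets ?P" if "b \<in> A" for b
      unfolding iid_def by (rule sets_PiM_cong) (use setsX[OF that] in auto)
    have psb: "prob_space (iid \<mu> b n)" if "b \<in> A" for b
      unfolding iid_def by (rule prob_space_PiM) (use mt that in \<open>auto simp: monitoring_tech_def\<close>)
    define T where "T = exp (\<tau> * real n)"
    have T: "T > 0" by (simp add: T_def)
    define S where "S = (\<Inter>a\<in>Am. {x\<in>space ?P. (\<Prod>i<n. l a (x i)) \<le> T})"
    have Sa: "\<And>a. a \<in> Am \<Longrightarrow> {x\<in>space ?P. (\<Prod>i<n. l a (x i)) \<le> T} \<in> sets ?P"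
    proof -
      fix a assume "a \<in> Am"
      hence "a \<in> A" by (simp add: Am_def)
      then interpret lr "\<mu> astar" "l a" by (rule lrI)
      show "{x\<in>space ?P. (\<Prod>i<n. l a (x i)) \<le> T} \<in> sets ?P" by measurable
    qed
    have Ssets: "S \<in> sets ?P" unfolding S_def using finAm Amne Sa by (intro sets.finite_INT) auto
    have Ssp: "S \<subseteq> space ?P" using Amne by (auto simp: S_def)
    define p where "p = measure ?P S"
    have p1: "1 - p \<le> \<epsilon> n"
    proof -
      have "space ?P - S = (\<Union>a\<in>Am. {x\<in>space ?P. (\<Prod>i<n. l a (x i)) > T})"
        by (auto simp: S_def not_le) (metis not_le)
      hence "measure ?P (space ?P - S) \<le> (\<Sum>a\<in>Am. measure ?P {x\<in>space ?P. (\<Prod>i<n. l a (x i)) > T})"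
        using finAm Sa by (simp, intro measure_UNION_le) (auto simp: not_le[symmetric] intro!: sets.sets_Collect_neg)
      also have "\<dots> \<le> (\<Sum>a\<in>Am. 1 / T)"
      proof (rule sum_mono)
        fix a assume "a \<in> Am"
        hence "a \<in> A" by (simp add: Am_def)
        then interpret lr "\<mu> astar" "l a" by (rule lrI)
        show "measure ?P {x\<in>space ?P. (\<Prod>i<n. l a (x i)) > T} \<le> 1 / T" by (rule markov[OF T])
      qed
      also have "\<dots> = \<epsilon> n" by (simp add: \<epsilon>_def T_def exp_minus field_simps)
      finally show ?thesis using P.prob_compl[OF Ssets] by (simp add: p_def)
    qed
    have p0: "0 \<le> p" "p \<le> 1" by (auto simp: p_def)
    define q where "q b = measure (iid \<mu> b n) S" for b
    have q01: "0 \<le> q b \<and> q b \<le> 1" if "b \<in> A" for b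
      using prob_space.prob_le_1[OF psb[OF that]] by (simp add: q_def)
    have qa: "q a \<le> \<rho> a ^ n" if "a \<in> Am" for a
    proof -
      have aA: "a \<in> A" using that by (simp add: Am_def)
      interpret lr "\<mu> astar" "l a" by (rule lrI[OF aA])
      have Qd: "iid \<mu> a n = density ?P (\<lambda>x. ennreal (\<Prod>i<n. l a (x i)))"
        unfolding l_def using tech(8)[OF mt asA aA, of n] by (simp only: iid_def)
      have "q a \<le> T powr \<beta> a * (\<integral>x. l a x powr (1 - \<beta> a) \<partial>\<mu> astar) ^ n"
        unfolding q_def Qd using \<beta>[OF that] that
        by (intro small_q[OF T _ _ Ssets]) (auto simp: S_def)
      also have "\<dots> = \<rho> a ^ n"
        by (simp add: T_def \<rho>_def powr_def power_mult_distrib exp_of_nat_mult[symmetric] algebra_simps)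
      finally show ?thesis .
    qed
    define wH where "wH = w0 + \<kappa> * (1 - p)"
    have wH: "w0 \<le> wH" "wH \<le> w0 + 1"
    proof -
      have "\<kappa> * (1 - p) \<le> \<kappa> * \<epsilon> n" using p1 \<kappa> by (intro mult_left_mono) auto
      thus "wH \<le> w0 + 1" using evn by (simp add: wH_def)
      show "w0 \<le> wH" using \<kappa> p0 by (simp add: wH_def)
    qed
    have uwH: "u wH \<ge> c astar" using u_mono[of w0 wH] wH w0 uw0 by simp
    define w where "w x = wl + (wH - wl) * indicator S x" for x
    have uw: "u (w x) = u wl + (u wH - u wl) * indicator S x" for x
      by (simp add: w_def indicator_def)
    have Ub: "(\<integral>x. u (w x) \<partial>iid \<mu> b n) = u wl + (u wH - u wl) * q b"
      "integrable (iid \<mu> b n) (\<lambda>x. u (w x))" if "b \<in> A" for b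
      unfolding uw q_def using int_ind[OF psb[OF that], of S] Ssets setsb[OF that] by auto
    have Ua: "(\<integral>x. u (w x) \<partial>iid \<mu> astar n) = u wl + (u wH - u wl) * p"
      using Ub(1)[OF asA] by (simp add: q_def p_def Pd)
    have Wi: "(\<integral>x. w x \<partial>iid \<mu> astar n) = wl + (wH - wl) * p" "integrable (iid \<mu> astar n) w"
      unfolding Pd w_def p_def using int_ind[OF P.prob_space_axioms Ssets] by auto
    have ok: "contract_ok wl u c A astar \<mu> n w"
      unfolding contract_ok_def
    proof (intro conjI ballI)
      show "w \<in> borel_measurable (iid \<mu> astar n)" using Wi(2) by auto
      show "wl \<le> w x" if "x \<in> space (iid \<mu> astar n)" for x using wH w0 by (simp add: w_def indicator_def)
      show "integrable (iid \<mu> astar n) w" by (rule Wi(2))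
      show "integrable (iid \<mu> b n) (\<lambda>x. u (w x))" if "b \<in> A" for b using Ub(2)[OF that] .
      show "(\<integral>x. u (w x) \<partial>iid \<mu> astar n) - c astar \<ge> 0"
      proof -
        have "u w0 \<le> u wH + u1 wH * (w0 - wH)" using tangent[of wH w0] wH w0 by simp
        moreover have "u1 (w0 + 1) \<le> u1 wH" using u1_mono[of wH "w0+1"] wH w0 by simp
        moreover have "u1 wH * (wH - w0) \<ge> u1 (w0 + 1) * (wH - w0)"
          using calculation(2) wH by (intro mult_right_mono) auto
        ultimately have "u wH - c astar \<ge> u1 (w0 + 1) * (\<kappa> * (1 - p))"
          using uw0 by (simp add: wH_def algebra_simps)
        also have "u1 (w0 + 1) * (\<kappa> * (1 - p)) = 2 * B0 * (1 - p)"
          using u1p by (simp add: \<kappa>_def)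
        finally have h: "u wH - c astar \<ge> 2 * B0 * (1 - p)" .
        have "p \<ge> 1/2" using p1 evn by linarith
        have "(\<integral>x. u (w x) \<partial>iid \<mu> astar n) - c astar = p * (u wH - c astar) - (1 - p) * B0"
          unfolding Ua B0_def by (simp add: algebra_simps)
        also have "\<dots> \<ge> p * (2 * B0 * (1 - p)) - (1 - p) * B0"
          using h p0 by (simp add: mult_left_mono)
        also have "p * (2 * B0 * (1 - p)) - (1 - p) * B0 = B0 * (1 - p) * (2 * p - 1)"
          by (simp add: algebra_simps)
        also have "\<dots> \<ge> 0" using B0 p0 \<open>p \<ge> 1/2\<close> by simp
        finally show ?thesis .
      qed
      fix b assume b: "b \<in> A"
      show "(\<integral>x. u (w x) \<partial>iid \<mu> astar n) - c astar \<ge> (\<integral>x. u (w x) \<partial>iid \<mu> b n) - c b"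
      proof -
        have "(\<integral>x. u (w x) \<partial>iid \<mu> astar n) - (\<integral>x. u (w x) \<partial>iid \<mu> b n) = (u wH - u wl) * (p - q b)"
          unfolding Ua Ub(1)[OF b] by (simp add: algebra_simps)
        moreover have "(u wH - u wl) * (p - q b) \<ge> c astar - c b"
        proof (cases "c b < c astar")
          case True
          hence bAm: "b \<in> Am" using b by (simp add: Am_def)
          have "p - q b \<ge> 1 - (\<epsilon> n + \<rho> b ^ n)" using p1 qa[OF bAm] by linarith
          also have "1 - (\<epsilon> n + \<rho> b ^ n) \<ge> 1 - (c b - u wl) / B0" using evn bAm by auto
          finally have pq: "p - q b \<ge> 1 - (c b - u wl) / B0" .
          have "1 - (c b - u wl) / B0 = (c astar - c b) / B0" using B0 by (simp add: B0_def field_simps)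
          hence pq': "p - q b \<ge> (c astar - c b) / B0" using pq by simp
          have "u wH - u wl \<ge> B0" using uwH by (simp add: B0_def)
          moreover have "(c astar - c b) / B0 \<ge> 0" using True B0 by simp
          ultimately have "B0 * ((c astar - c b) / B0) \<le> (u wH - u wl) * (p - q b)"
            using pq' B0 by (intro mult_mono) auto
          thus ?thesis using B0 by simp
        next
          case False
          show ?thesis
          proof (cases "b = astar")
            case True thus ?thesis using p0 by (simp add: q_def p_def Pd)
          next
            case nb: False
            hence gt: "c b > c astar" using False cne[OF b] by auto
            have "u wH - u wl \<ge> 0" using uwH B0 by (simp add: B0_def)
            moreover have "u wH - u wl \<le> H" using u_mono[of wH "w0 + 1"] wH w0 by (simp add: H_def)
            moreover have "p - q b \<ge> -(1 - p)" using q01[OF b] by simp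
            ultimately have "(u wH - u wl) * (p - q b) \<ge> - (H * (1 - p))"
            proof -
              assume a1: "u wH - u wl \<ge> 0" and a2: "u wH - u wl \<le> H" and a3: "p - q b \<ge> -(1 - p)"
              have "(u wH - u wl) * (-(1 - p)) \<le> (u wH - u wl) * (p - q b)"
                by (rule mult_left_mono[OF a3 a1])
              moreover have "(u wH - u wl) * (1 - p) \<le> H * (1 - p)"
                using a2 p0 by (intro mult_right_mono) auto
              ultimately show ?thesis unfolding mult_minus_right by linarith
            qed
            moreover have "H * (1 - p) \<le> H * \<epsilon> n"
              using p1 \<open>u wH - u wl \<le> H\<close> \<open>u wH - u wl \<ge> 0\<close> by (intro mult_left_mono) auto
            moreover have "\<epsilon> n * H \<le> c b - c astar" using evn b gt by auto
            ultimately show ?thesis by (simp add: mult.commute)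
          qed
        qed
        ultimately show ?thesis by linarith
      qed
    qed
    have card: "card (w ` space (iid \<mu> astar n)) = 2"
    proof -
      obtain a where aAm: "a \<in> Am" using Amne by auto
      have "q a < 1"
      proof -
        have "\<rho> a ^ n \<le> (c a - u wl) / B0" using evn aAm \<epsilon>0[of n] by auto
        also have "\<dots> < 1" using aAm B0 by (simp add: Am_def B0_def)
        finally show ?thesis using qa[OF aAm] by simp
      qed
      hence "S \<noteq> space ?P"
      proof -
        have aA: "a \<in> A" using aAm by (simp add: Am_def)
        have "space (iid \<mu> a n) = space ?P" using setsb[OF aA] sets_eq_imp_space_eq by blast
        thus ?thesis using \<open>q a < 1\<close> prob_space.prob_space[OF psb[OF aA]] by (auto simp: q_def)
      qed
      moreover have "S \<noteq> {}" using p1 evn by (auto simp: p_def)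
      moreover have "wl \<noteq> wH" using wH w0 by simp
      ultimately show ?thesis unfolding Pd w_def by (intro card_two Ssp)
    qed
    have cost: "(\<integral>x. w x \<partial>iid \<mu> astar n) \<le> w0 + \<kappa> * real (card Am) * exp (- \<tau> * real n)"
    proof -
      have "(\<integral>x. w x \<partial>iid \<mu> astar n) \<le> wH"
      proof -
        have "(wH - wl) * p \<le> (wH - wl) * 1" using p0 wH w0 by (intro mult_left_mono) auto
        thus ?thesis unfolding Wi(1) by simp
      qed
      also have "wH \<le> w0 + \<kappa> * \<epsilon> n" using p1 \<kappa> by (simp add: wH_def mult_left_mono)
      finally show ?thesis by (simp add: \<epsilon>_def mult.assoc)
    qed
    show "\<exists>w. contract_ok wl u c A astar \<mu> n w \<and> card (w ` space (iid \<mu> astar n)) = 2 \<and>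
        (\<integral>x. w x \<partial>iid \<mu> astar n) \<le> w0 + \<kappa> * real (card Am) * exp (- \<tau> * real n)"
      using ok card cost by blast
  qed
qed

end

lemma interior_pm:
  fixes y :: real
  assumes "y \<in> interior S"
  shows "\<exists>e>0. y - e \<in> S \<and> y + e \<in> S"
proof -
  obtain \<epsilon> where "\<epsilon> > 0" "ball y \<epsilon> \<subseteq> S" using assms mem_interior by blast
  moreover have "y - \<epsilon>/2 \<in> ball y \<epsilon>" "y + \<epsilon>/2 \<in> ball y \<epsilon>" using \<open>\<epsilon> > 0\<close> by (auto simp: dist_real_def)
  ultimately show ?thesis by (intro exI[of _ "\<epsilon>/2"]) auto
qed

lemma (in lr) gibbs: "(\<integral>x. l x * ln (l x) \<partial>M) \<ge> 0"
proof -
  interpret prob_space M by (rule ps)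
  have i: "integrable M (\<lambda>x. l x * ln (l x))"
    by (rule renyi_lim(1)[OF ps lm _ lint[of "5/2"], of "\<lambda>k. 1 / (real k + 2)"])
       (use lnn in \<open>auto, real_asymp\<close>)
  have "(\<integral>x. l x - 1 \<partial>M) \<le> (\<integral>x. l x * ln (l x) \<partial>M)"
  proof (rule integral_mono[OF _ i])
    show "integrable M (\<lambda>x. l x - 1)" using l_int by simp
    fix x
    show "l x - 1 \<le> l x * ln (l x)"
    proof (cases "l x = 0")
      case False
      hence lp: "l x > 0" using lnn[of x] by simp
      have "ln (1 / l x) \<le> 1 / l x - 1" using lp by (intro ln_le_minus_one) simp
      hence "- ln (l x) \<le> 1 / l x - 1" using lp by (simp add: ln_div)
      hence "l x * (- ln (l x)) \<le> l x * (1 / l x - 1)" using lp by (intro mult_left_mono) auto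
      thus ?thesis using lp by (simp add: algebra_simps)
    qed simp
  qed
  also have "(\<integral>x. l x - 1 \<partial>M) = 0" using l_int l1 prob_space by simp
  finally show ?thesis by simp
qed

theorem corollary1:
  fixes A :: "'a set" and astar :: 'a and Am :: "'a set"
    and X :: "'x::euclidean_space set" and \<mu> :: "'a \<Rightarrow> 'x measure"
    and X' :: "'y::euclidean_space set" and \<mu>' :: "'a \<Rightarrow> 'y measure"
  assumes "finite A" and "astar \<in> A" and "Am \<noteq> {}" and "Am \<subset> A"
    and "monitoring_tech X A \<mu>" and "monitoring_tech X' A \<mu>'"
    and "(MIN a\<in>Am. KL (\<mu> a) (\<mu> astar)) > (MIN a\<in>Am. KL (\<mu>' a) (\<mu>' astar))"
  shows "\<forall>wl u c. standing_assms wl u c A astar \<and> Aminus c A astar = Am \<longrightarrow>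
           (\<exists>N. \<forall>n\<ge>N. C_SB wl u c A astar \<mu> n \<le> C_bin wl u c A astar \<mu> n \<and>
                       C_bin wl u c A astar \<mu> n < C_SB wl u c A astar \<mu>' n)"
proof (intro allI impI)
  fix wl u and c :: "'a \<Rightarrow> real"
  assume H: "standing_assms wl u c A astar \<and> Aminus c A astar = Am"
  note finA = assms(1) and asA = assms(2) and Amne = assms(3) and AmA = assms(4)
    and mt = assms(5) and mt' = assms(6) and KLh = assms(7)
  have AmD: "Am = {a\<in>A. c a < c astar}" using H by (simp add: Aminus_def)
  obtain u1 u2 where
    d: "\<And>w. w \<ge> wl \<Longrightarrow> (u has_real_derivative u1 w) (at w within {wl..}) \<and>
                        (u1 has_real_derivative u2 w) (at w within {wl..}) \<and> u1 w > 0 \<and> u2 w < 0"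
    and cont: "continuous_on {wl..} u2"
    using H unfolding standing_assms_def by blast
  have cint: "c ` A \<subseteq> interior (u ` {wl..})" and cne: "\<And>a. a \<in> A \<Longrightarrow> a \<noteq> astar \<Longrightarrow> c a \<noteq> c astar"
    using H unfolding standing_assms_def by auto
  interpret util wl u u1 u2 using d cont by unfold_locales auto
  have cgt: "c a > u wl" if "a \<in> A" for a
  proof -
    have "c a \<in> interior (u ` {wl..})" using cint that by (rule subsetD[OF _ imageI])
    then obtain e where e: "e > 0" "c a - e \<in> u ` {wl..}" using interior_pm by blast
    then obtain y where "y \<ge> wl" "c a - e = u y" by auto
    thus ?thesis using u_mono[of wl y] e by simp
  qed
  obtain a0 where a0: "a0 \<in> Am" using Amne by auto
  have a0A: "a0 \<in> A" "c a0 < c astar" using a0 AmD by auto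
  obtain w0 where w0: "w0 > wl" "u w0 = c astar"
  proof -
    have "c astar \<in> interior (u ` {wl..})" using cint asA by (rule subsetD[OF _ imageI])
    then obtain e where e: "e > 0" "c astar + e \<in> u ` {wl..}" using interior_pm by blast
    then obtain y where y: "y \<ge> wl" "c astar + e = u y" by auto
    have lt: "u wl < c astar" using cgt[OF a0A(1)] a0A(2) by simp
    have "\<exists>x. wl \<le> x \<and> x \<le> y \<and> u x = c astar"
      by (rule IVT') (use lt y e u_cont in \<open>auto intro: continuous_on_subset\<close>)
    then obtain x where "wl \<le> x" "u x = c astar" by auto
    moreover have "x \<noteq> wl" using lt calculation by auto
    ultimately have "wl < x" by simp
    thus ?thesis using that \<open>u x = c astar\<close> by blast
  qed
  interpret econ wl u u1 u2 c A astar w0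
    by unfold_locales (use finA asA w0 cgt cne in auto)
  define K where "K a = (\<integral>x. enn2real (RN_deriv (\<mu> astar) (\<mu> a) x) * ln (enn2real (RN_deriv (\<mu> astar) (\<mu> a) x)) \<partial>\<mu> astar)" for a
  define K' where "K' a = (\<integral>x. enn2real (RN_deriv (\<mu>' astar) (\<mu>' a) x) * ln (enn2real (RN_deriv (\<mu>' astar) (\<mu>' a) x)) \<partial>\<mu>' astar)" for a
  have KL1: "KL (\<mu> a) (\<mu> astar) = ereal (K a)" if "a \<in> A" for a
    unfolding K_def by (rule tech(7)[OF mt asA that])
  have KL2: "KL (\<mu>' a) (\<mu>' astar) = ereal (K' a)" if "a \<in> A" for a
    unfolding K'_def by (rule tech(7)[OF mt' asA that])
  have finAm: "finite Am" using finA AmA finite_subset by auto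
  have AmA': "Am \<subseteq> A" using AmA by auto
  obtain a' where a': "a' \<in> Am" "KL (\<mu>' a') (\<mu>' astar) = (MIN a\<in>Am. KL (\<mu>' a) (\<mu>' astar))"
  proof -
    have "(MIN a\<in>Am. KL (\<mu>' a) (\<mu>' astar)) \<in> (\<lambda>a. KL (\<mu>' a) (\<mu>' astar)) ` Am"
      using finAm Amne by (intro Min_in) auto
    thus ?thesis using that by auto
  qed
  have a'A: "a' \<in> A" using a' AmA' by auto
  have Kgt: "K a > K' a'" if "a \<in> Am" for a
  proof -
    have "KL (\<mu> a) (\<mu> astar) \<ge> (MIN a\<in>Am. KL (\<mu> a) (\<mu> astar))" using that finAm by simp
    hence "ereal (K a) > ereal (K' a')" using KLh a' KL1 KL2 that AmA' a'A by auto
    thus ?thesis by simp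
  qed
  define Kmin where "Kmin = Min (K ` Am)"
  have Kmin: "Kmin > K' a'" "\<And>a. a \<in> Am \<Longrightarrow> Kmin \<le> K a"
    using Min_in[of "K ` Am"] finAm Amne Kgt by (auto simp: Kmin_def)
  have K'0: "K' a' \<ge> 0"
  proof -
    interpret lr "\<mu>' astar" "\<lambda>x. enn2real (RN_deriv (\<mu>' astar) (\<mu>' a') x)"
      unfolding lr_def using tech[OF mt' asA a'A] by blast
    show ?thesis unfolding K'_def by (rule gibbs)
  qed
  define s where "s = (K' a' + Kmin) / 2"
  define \<tau> where "\<tau> = (s + Kmin) / 2"
  have s: "s > K' a'" "s < \<tau>" "\<tau> > 0" using Kmin(1) K'0 unfolding s_def \<tau>_def by argo+
  have \<tau>K: "\<tau> < K a" if "a \<in> Am" for a using Kmin(2)[OF that] Kmin(1) unfolding s_def \<tau>_def by argo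
  obtain \<gamma> where \<gamma>: "\<gamma> > 0" "(\<integral>x. enn2real (RN_deriv (\<mu>' astar) (\<mu>' a') x) powr (1 + \<gamma>) \<partial>\<mu>' astar) < exp (\<gamma> * s)"
  proof -
    interpret lr "\<mu>' astar" "\<lambda>x. enn2real (RN_deriv (\<mu>' astar) (\<mu>' a') x)"
      unfolding lr_def using tech[OF mt' asA a'A] by blast
    show ?thesis using renyi_sides(2)[OF ps lm _ lint l1, of s] lnn s(1) that unfolding K'_def by blast
  qed
  have ca': "c a' < c astar" using a' AmD by auto
  obtain D C where DC: "D > 0" "C > 0"
    and LB: "\<forall>\<^sub>F n in sequentially. \<forall>w. contract_ok wl u c A astar \<mu>' n w \<longrightarrow>
            (\<integral>x. w x \<partial>iid \<mu>' astar n) \<ge> w0 + min D (C * exp (- s * real n))"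
    using lower_bound[OF mt' a'A ca' \<gamma>] by blast
  obtain C1 where UB: "\<forall>\<^sub>F n in sequentially. \<exists>w. contract_ok wl u c A astar \<mu> n w \<and>
            card (w ` space (iid \<mu> astar n)) = 2 \<and> (\<integral>x. w x \<partial>iid \<mu> astar n) \<le> w0 + C1 * exp (- \<tau> * real n)"
    using upper_bound[OF mt _ s(3)] \<tau>K AmD Amne unfolding K_def by blast
  have ev1: "\<forall>\<^sub>F n in sequentially. C1 * exp (- \<tau> * real n) < D"
  proof -
    have "(\<lambda>n. C1 * exp (- \<tau> * real n)) \<longlonglongrightarrow> C1 * 0"
      by (intro tendsto_mult tendsto_const) (use s(3) in real_asymp)
    thus ?thesis using DC by (intro order_tendstoD(2)) auto
  qed
  have ev2: "\<forall>\<^sub>F n in sequentially. C1 * exp (- \<tau> * real n) < C * exp (- s * real n)"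
  proof -
    have "(\<lambda>n. C1 * exp (- (\<tau> - s) * real n)) \<longlonglongrightarrow> C1 * 0"
      by (intro tendsto_mult tendsto_const) (use s(2) in real_asymp)
    hence "\<forall>\<^sub>F n in sequentially. C1 * exp (- (\<tau> - s) * real n) < C" using DC by (intro order_tendstoD(2)) auto
    thus ?thesis
    proof (rule eventually_mono)
      fix n assume h: "C1 * exp (- (\<tau> - s) * real n) < C"
      have e: "exp (- \<tau> * real n) = exp (- (\<tau> - s) * real n) * exp (- s * real n)"
        by (simp flip: exp_add add: algebra_simps)
      have "C1 * exp (- \<tau> * real n) = (C1 * exp (- (\<tau> - s) * real n)) * exp (- s * real n)"
        by (simp only: e mult.assoc)
      also have "\<dots> < C * exp (- s * real n)" using h by (intro mult_strict_right_mono) auto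
      finally show "C1 * exp (- \<tau> * real n) < C * exp (- s * real n)" .
    qed
  qed
  have "\<forall>\<^sub>F n in sequentially. (\<exists>w. contract_ok wl u c A astar \<mu> n w \<and>
            card (w ` space (iid \<mu> astar n)) = 2 \<and> (\<integral>x. w x \<partial>iid \<mu> astar n) \<le> w0 + C1 * exp (- \<tau> * real n))
          \<and> (\<forall>w. contract_ok wl u c A astar \<mu>' n w \<longrightarrow>
            (\<integral>x. w x \<partial>iid \<mu>' astar n) \<ge> w0 + min D (C * exp (- s * real n)))
          \<and> C1 * exp (- \<tau> * real n) < D \<and> C1 * exp (- \<tau> * real n) < C * exp (- s * real n)"
    using UB LB ev1 ev2 by eventually_elim auto
  then obtain N where N: "\<And>n. n \<ge> N \<Longrightarrow> (\<exists>w. contract_ok wl u c A astar \<mu> n w \<and>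
            card (w ` space (iid \<mu> astar n)) = 2 \<and> (\<integral>x. w x \<partial>iid \<mu> astar n) \<le> w0 + C1 * exp (- \<tau> * real n))
          \<and> (\<forall>w. contract_ok wl u c A astar \<mu>' n w \<longrightarrow>
            (\<integral>x. w x \<partial>iid \<mu>' astar n) \<ge> w0 + min D (C * exp (- s * real n)))
          \<and> C1 * exp (- \<tau> * real n) < D \<and> C1 * exp (- \<tau> * real n) < C * exp (- s * real n)"
    unfolding eventually_sequentially by blast
  show "\<exists>N. \<forall>n\<ge>N. C_SB wl u c A astar \<mu> n \<le> C_bin wl u c A astar \<mu> n \<and>
                       C_bin wl u c A astar \<mu> n < C_SB wl u c A astar \<mu>' n"
  proof (intro exI[of _ N] allI impI conjI)
    fix n assume n: "N \<le> n"
    show "C_SB wl u c A astar \<mu> n \<le> C_bin wl u c A astar \<mu> n"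
      unfolding C_SB_def C_bin_def by (rule Inf_superset_mono) auto
    from N[OF n] obtain w where w: "contract_ok wl u c A astar \<mu> n w"
      "card (w ` space (iid \<mu> astar n)) = 2" "(\<integral>x. w x \<partial>iid \<mu> astar n) \<le> w0 + C1 * exp (- \<tau> * real n)"
      by blast
    have "C_bin wl u c A astar \<mu> n \<le> ereal (\<integral>x. w x \<partial>iid \<mu> astar n)"
      unfolding C_bin_def by (rule Inf_lower) (use w in blast)
    also have "\<dots> \<le> ereal (w0 + C1 * exp (- \<tau> * real n))" using w(3) by simp
    also have "\<dots> < ereal (w0 + min D (C * exp (- s * real n)))" using N[OF n] by simp
    also have "\<dots> \<le> C_SB wl u c A astar \<mu>' n"
      unfolding C_SB_def by (rule Inf_greatest) (use N[OF n] in auto)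
    finally show "C_bin wl u c A astar \<mu> n < C_SB wl u c A astar \<mu>' n" .
  qed
qed

end
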